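(* Let $\gamma>0$, $s\in(0,q^{-1/2})$, $g\in\mathcal I^{\mathcal E}_\gamma$ and $F\in\mathcal M_s$. Then $g*_\gamma F=0$ if and only if $\mu_\gamma(g)\equiv0$ or $F=0$. In particular, if $g*_\gamma F=0$ for some nonzero $F\in\mathcal M_s$, then $g*_\gamma h=0$ for every function $h$ for which $g*_\gamma h$ is defined.
   Context: Fix $q\in(0,1)$. Notation: $(a;q)_k=\prod_{j=0}^{k-1}(1-aq^j)$, $(a;q)_\infty=\lim_k(a;q)_k$, $[k]_q!=(q;q)_k/(1-q)^k$, $e_q(x)=1/(x;q)_\infty$. The $q$-derivative is $(\partial f)(x)=\frac{f(x)-f(qx)}{(1-q)x}$ (extended to $x=0$ by continuity for $f$ holomorphic near $0$). For $\gamma>0$, $L(\gamma)=\{\pm q^k\gamma:k\in\mathbb Z\}$ and $\int_\gamma f=(1-q)\sum_{k\in\mathbb Z}\sum_{\epsilon=\pm1}q^k\gamma f(\epsilon q^k\gamma)$ whenever absolutely convergent. $\mathcal I^\infty_\gamma$ is the set of functions $f$ on $L(\gamma)$ with $\int_\gamma|f(x)x^e|<\infty$ for all integers $e\ge0$. Moments: $\mu_{e,\gamma}(f)=q^{(e^2+e)/2}\int_\gamma f(x)x^e$. The $q$-moment series is $\mu_\gamma(f)(t)=\sum_{k\ge0}\mu_{k,\gamma}(f)t^k/[k]_q!$; $\mathcal I^{\mathcal E}_\gamma$ is the set of $f\in\mathcal I^\infty_\gamma$ with $\mu_\gamma(f)$ entire. The $q$-convolution of $f\in\mathcal I^\infty_\gamma$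 with $g$ is $(f*_\gamma g)(x)=\sum_{e\ge0}\frac{(-1)^e\mu_{e,\gamma}(f)}{[e]_q!}(\partial^eg)(x)$ at all $x$ where the $q$-derivatives are defined and the series converges absolutely. For $s>0$, $\mathcal M_s$ is the set of functions $F(x)=f(x)e_{q^2}(-x^2)$ (holomorphic on $|\mathrm{Im}\,x|<1$) where $f(x)=\sum_{l\ge0}a_lx^l$ with $|a_l|\le Cs^lq^{l^2/2}$ for all $l$, for some $C>0$. *)

theory Defs
  imports "HOL-Analysis.Analysis"
begin

definition qpoch :: "complex \<Rightarrow> real \<Rightarrow> nat \<Rightarrow> complex" where
  "qpoch a q k = (\<Prod>j<k. 1 - a * complex_of_real (q ^ j))"

definition qpoch_inf :: "complex \<Rightarrow> real \<Rightarrow> complex" where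
  "qpoch_inf a q = lim (\<lambda>k. qpoch a q k)"

definition qfact :: "real \<Rightarrow> nat \<Rightarrow> real" where
  "qfact q k = (\<Prod>j<k. 1 - q ^ (Suc j)) / (1 - q) ^ k"

definition qexp :: "real \<Rightarrow> complex \<Rightarrow> complex" where
  "qexp q x = 1 / qpoch_inf x q"

definition qD :: "real \<Rightarrow> (complex \<Rightarrow> complex) \<Rightarrow> complex \<Rightarrow> complex" where
  "qD q f x = (if x \<noteq> 0
      then (f x - f (complex_of_real q * x)) / (complex_of_real (1 - q) * x)
      else Lim (at 0) (\<lambda>y. (f y - f (complex_of_real q * y)) / (complex_of_real (1 - q) * y)))"

text \<open>Terms of the q-integral over L(gamma), indexed by (k, epsilon) in Z x {-1,1}.\<close>
definition qint_terms :: "real \<Rightarrow> real \<Rightarrow> (real \<Rightarrow> complex) \<Rightarrow> int \<times> real \<Rightarrow> complex" where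
  "qint_terms q \<gamma> f = (\<lambda>(k, \<epsilon>). complex_of_real (q powi k * \<gamma>) * f (\<epsilon> * q powi k * \<gamma>))"

definition qint_index :: "(int \<times> real) set" where
  "qint_index = UNIV \<times> {-1, 1}"

definition qintegrable :: "real \<Rightarrow> real \<Rightarrow> (real \<Rightarrow> complex) \<Rightarrow> bool" where
  "qintegrable q \<gamma> f \<longleftrightarrow> (\<lambda>p. norm (qint_terms q \<gamma> f p)) summable_on qint_index"

definition qint :: "real \<Rightarrow> real \<Rightarrow> (real \<Rightarrow> complex) \<Rightarrow> complex" where
  "qint q \<gamma> f = complex_of_real (1 - q) * infsum (qint_terms q \<gamma> f) qint_index"

definition I_inf :: "real \<Rightarrow> real \<Rightarrow> (real \<Rightarrow> complex) set" where
  "I_inf q \<gamma> = {f. \<forall>e::nat. qintegrable q \<gamma> (\<lambda>x. f x * complex_of_real (x ^ e))}"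

definition qmoment :: "real \<Rightarrow> real \<Rightarrow> (real \<Rightarrow> complex) \<Rightarrow> nat \<Rightarrow> complex" where
  "qmoment q \<gamma> f e = complex_of_real (q ^ ((e^2 + e) div 2)) * qint q \<gamma> (\<lambda>x. f x * complex_of_real (x ^ e))"

definition qmoment_series :: "real \<Rightarrow> real \<Rightarrow> (real \<Rightarrow> complex) \<Rightarrow> complex \<Rightarrow> complex" where
  "qmoment_series q \<gamma> f t = (\<Sum>k. qmoment q \<gamma> f k * t ^ k / complex_of_real (qfact q k))"

definition I_E :: "real \<Rightarrow> real \<Rightarrow> (real \<Rightarrow> complex) set" where
  "I_E q \<gamma> = {f \<in> I_inf q \<gamma>.
      \<forall>t::complex. summable (\<lambda>k. qmoment q \<gamma> f k * t ^ k / complex_of_real (qfact q k))}"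

definition qconv_term :: "real \<Rightarrow> real \<Rightarrow> (real \<Rightarrow> complex) \<Rightarrow> (complex \<Rightarrow> complex) \<Rightarrow> complex \<Rightarrow> nat \<Rightarrow> complex" where
  "qconv_term q \<gamma> f g x e =
     (-1) ^ e * qmoment q \<gamma> f e / complex_of_real (qfact q e) * ((qD q ^^ e) g) x"

definition qconv_defined :: "real \<Rightarrow> real \<Rightarrow> (real \<Rightarrow> complex) \<Rightarrow> (complex \<Rightarrow> complex) \<Rightarrow> complex \<Rightarrow> bool" where
  "qconv_defined q \<gamma> f g x \<longleftrightarrow> summable (\<lambda>e. norm (qconv_term q \<gamma> f g x e))"

definition qconv :: "real \<Rightarrow> real \<Rightarrow> (real \<Rightarrow> complex) \<Rightarrow> (complex \<Rightarrow> complex) \<Rightarrow> complex \<Rightarrow> complex" where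
  "qconv q \<gamma> f g x = (\<Sum>e. qconv_term q \<gamma> f g x e)"

definition strip :: "complex set" where
  "strip = {x. \<bar>Im x\<bar> < 1}"

definition M_s :: "real \<Rightarrow> real \<Rightarrow> (complex \<Rightarrow> complex) set" where
  "M_s q s = {F. \<exists>(a::nat \<Rightarrow> complex) C. C > 0 \<and>
      (\<forall>l. norm (a l) \<le> C * s ^ l * q powr (real l ^ 2 / 2)) \<and>
      (\<forall>x\<in>strip. F x = (\<Sum>l. a l * x ^ l) * qexp (q^2) (- (x^2)))}"

end

theory Submission
  imports Defs "HOL-Complex_Analysis.Complex_Analysis"
begin

lemma geo_quad_summable:
  fixes r t :: real assumes r: "0 < r" "r < 1" and t: "0 \<le> t"
  shows "summable (\<lambda>n. t^n * r^(n^2))"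
proof -
  obtain N where N: "r^N < 1/(2*(t+1))"
    using real_arch_pow_inv[of "1/(2*(t+1))" r] r t by auto
  have "t * r^N \<le> 1/2"
  proof -
    have "t * r^N \<le> (t+1) * r^N" using r by (simp add: mult_right_mono)
    also have "\<dots> \<le> (t+1) * (1/(2*(t+1)))" using N t by (intro mult_left_mono) auto
    also have "\<dots> = 1/2" using t by simp
    finally show ?thesis .
  qed
  show ?thesis
  proof (rule summable_comparison_test'[OF summable_geometric[of "1/2::real"]])
    fix n assume "n \<ge> N"
    have "t^n * r^(n^2) = (t * r^n)^n" by (simp add: power2_eq_square power_mult power_mult_distrib)
    also have "\<dots> \<le> (t * r^N)^n"
      using r t \<open>n \<ge> N\<close> by (intro power_mono mult_left_mono power_decreasing) auto
    also have "\<dots> \<le> (1/2)^n" using \<open>t * r^N \<le> 1/2\<close> r t by (intro power_mono) auto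
    finally show "norm (t^n * r^(n^2)) \<le> (1/2)^n" using r t by simp
  qed simp
qed

lemma quad_bounded:
  fixes r t :: real assumes r: "0 < r" "r < 1" and t: "0 \<le> t"
  obtains B where "B > 0" "\<And>n. t^n * r^(n^2) \<le> B"
proof -
  have "(\<lambda>n. t^n * r^(n^2)) \<longlonglongrightarrow> 0" using summable_LIMSEQ_zero[OF geo_quad_summable[OF r t]] .
  then have "Bseq (\<lambda>n. t^n * r^(n^2))" by (rule convergent_imp_Bseq[OF convergentI])
  then obtain K where K: "K > 0" "\<And>n. norm (t^n * r^(n^2)) \<le> K" by (auto simp: Bseq_def)
  show ?thesis by (rule that[of K]) (use K in \<open>auto intro: abs_le_D1 simp del: norm_mult\<close>)
qed

lemma infsum_suminf_norm:
  fixes f :: "nat \<Rightarrow> complex"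
  assumes "summable (\<lambda>n. norm (f n))"
  shows "infsum f UNIV = suminf f"
  using norm_summable_imp_has_sum[OF assms] assms summable_norm_cancel[OF assms]
  by (simp add: infsumI summable_sums)

lemma dsum_swap:
  fixes u :: "nat \<Rightarrow> nat \<Rightarrow> complex" and A B :: "nat \<Rightarrow> real"
  assumes ub: "\<And>e n. norm (u e n) \<le> A e * B n" and sA: "summable A" and sB: "summable B"
    and A0: "\<And>e. A e \<ge> 0" and B0: "\<And>n. B n \<ge> 0"
  shows "(\<Sum>e. \<Sum>n. u e n) = (\<Sum>n. \<Sum>e. u e n)"
proof -
  have hs: "((\<lambda>n. A e * B n) has_sum (A e * suminf B)) UNIV" for e
    by (rule sums_nonneg_imp_has_sum) (use sB A0 B0 in \<open>auto intro: sums_mult summable_sums\<close>)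
  have gs: "(\<lambda>e. A e * suminf B) summable_on UNIV"
    using norm_summable_imp_summable_on[of "\<lambda>e. A e * suminf B"] sA A0 B0 suminf_nonneg[OF sB]
    by (simp add: summable_mult2)
  have "(\<lambda>(e,n). A e * B n) summable_on Sigma UNIV (\<lambda>_. UNIV)"
    by (rule summable_on_SigmaI[where g="\<lambda>e. A e * suminf B"]) (use hs gs A0 B0 in auto)
  then have p: "Infinite_Sum.abs_summable_on (\<lambda>(e,n). A e * B n) (UNIV \<times> UNIV)"
    by (rule summable_on_cong[THEN iffD1, rotated]) (use A0 B0 in auto)
  have "Infinite_Sum.abs_summable_on (\<lambda>(e,n). u e n) (UNIV \<times> UNIV)"
    by (rule Infinite_Sum.abs_summable_on_comparison_test[OF p]) (use ub A0 B0 in auto)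
  then have su: "(\<lambda>(e,n). u e n) summable_on UNIV \<times> UNIV" by (rule abs_summable_summable)
  have inner1: "summable (\<lambda>n. norm (u e n))" for e
    by (rule summable_comparison_test'[OF summable_mult[OF sB, of "A e"]]) (use ub in auto)
  have inner2: "summable (\<lambda>e. norm (u e n))" for n
    by (rule summable_comparison_test'[OF summable_mult2[OF sA, of "B n"]]) (use ub in auto)
  have outer1: "summable (\<lambda>e. norm (\<Sum>n. u e n))"
  proof (rule summable_comparison_test'[OF summable_mult2[OF sA, of "suminf B"]])
    fix e
    have "norm (\<Sum>n. u e n) \<le> (\<Sum>n. norm (u e n))" by (rule summable_norm[OF inner1])
    also have "\<dots> \<le> (\<Sum>n. A e * B n)" by (rule suminf_le) (use ub inner1 summable_mult[OF sB] in auto)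
    also have "\<dots> = A e * suminf B" by (rule suminf_mult[OF sB])
    finally show "norm (norm (\<Sum>n. u e n)) \<le> A e * suminf B" by simp
  qed
  have outer2: "summable (\<lambda>n. norm (\<Sum>e. u e n))"
  proof (rule summable_comparison_test'[OF summable_mult[OF sB, of "suminf A"]])
    fix n
    have "norm (\<Sum>e. u e n) \<le> (\<Sum>e. norm (u e n))" by (rule summable_norm[OF inner2])
    also have "\<dots> \<le> (\<Sum>e. A e * B n)" by (rule suminf_le) (use ub inner2 summable_mult2[OF sA] in auto)
    also have "\<dots> = suminf A * B n" by (rule suminf_mult2[OF sA, symmetric])
    finally show "norm (norm (\<Sum>e. u e n)) \<le> suminf A * B n" by simp
  qed
  have "(\<Sum>e. \<Sum>n. u e n) = infsum (\<lambda>e. infsum (\<lambda>n. u e n) UNIV) UNIV"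
    using infsum_suminf_norm[OF inner1] infsum_suminf_norm[OF outer1] by simp
  also have "\<dots> = infsum (\<lambda>n. infsum (\<lambda>e. u e n) UNIV) UNIV"
    by (rule infsum_swap_banach[OF su])
  also have "\<dots> = (\<Sum>n. \<Sum>e. u e n)"
    using infsum_suminf_norm[OF inner2] infsum_suminf_norm[OF outer2] by simp
  finally show ?thesis .
qed

lemma powser_nz_near0:
  fixes a :: "nat \<Rightarrow> complex"
  assumes sm: "\<And>x. summable (\<lambda>n. a n * x^n)" and am: "a m \<noteq> 0"
  obtains s where "s > 0" "\<And>z. z \<noteq> 0 \<Longrightarrow> norm z \<le> s \<Longrightarrow> (\<Sum>n. a n * z^n) \<noteq> 0"
proof (cases "a 0 = 0")
  case False
  have "isCont (\<lambda>x. \<Sum>n. a n * x^n) 0" by (rule isCont_powser_converges_everywhere[OF sm])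
  then have "\<forall>\<^sub>F z in at 0. dist (\<Sum>n. a n * z^n) (\<Sum>n. a n * 0^n) < norm (a 0)"
    using False unfolding isCont_def tendsto_iff by simp
  then obtain d where d: "d > 0" "\<And>z. z \<noteq> 0 \<Longrightarrow> dist z 0 < d \<Longrightarrow> dist (\<Sum>n. a n * z^n) (a 0) < norm (a 0)"
    unfolding eventually_at by auto
  show ?thesis
  proof (rule that[of "d/2"])
    fix z :: complex assume "z \<noteq> 0" "norm z \<le> d/2"
    then have "dist (\<Sum>n. a n * z^n) (a 0) < norm (a 0)" using d by simp
    then show "(\<Sum>n. a n * z^n) \<noteq> 0" by (auto simp: dist_norm)
  qed (use d in simp)
next
  case True
  then have "m > 0" using am by (cases m) auto
  obtain s where s: "0 < s" "\<And>z. z \<in> cball 0 s - {0} \<Longrightarrow> (\<Sum>n. a n * z^n) \<noteq> 0"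
  proof (rule powser_0_nonzero[where r=1 and \<xi>=0 and f="\<lambda>x. \<Sum>n. a n * x^n" and m=m])
    show "(\<lambda>n. a n * (x - 0) ^ n) sums (\<Sum>n. a n * x^n)" for x
      using summable_sums[OF sm[of x]] by simp
  qed (use True am \<open>m > 0\<close> in auto)
  then show ?thesis using that[of s] by auto
qed

definition fac :: "real \<Rightarrow> complex \<Rightarrow> nat \<Rightarrow> complex" where
  "fac q x j = 1 - (-(x^2)) * complex_of_real ((q^2)^j)"

lemma fac_convergent:
  assumes q: "0 < q" "q < 1"
  shows "convergent_prod (fac q x)"
proof -
  have "summable (\<lambda>j. norm (x^2) * (q^2)^j)"
    using q by (intro summable_mult summable_geometric) (simp add: power_less_one_iff abs_less_iff)
  then have "summable (\<lambda>j. norm (fac q x j - 1))"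
    using q by (simp add: fac_def norm_mult norm_power)
  then show ?thesis
    by (intro abs_convergent_prod_imp_convergent_prod summable_imp_abs_convergent_prod)
qed

lemma qpoch_inf_eq:
  assumes q: "0 < q" "q < 1"
  shows "qpoch_inf (-(x^2)) (q^2) = prodinf (fac q x)"
proof -
  have "(\<lambda>n. \<Prod>i\<le>n. fac q x i) \<longlonglongrightarrow> prodinf (fac q x)"
    by (rule convergent_prod_LIMSEQ[OF fac_convergent[OF q]])
  then have "(\<lambda>n. qpoch (-(x^2)) (q^2) (Suc n)) \<longlonglongrightarrow> prodinf (fac q x)"
    by (simp add: qpoch_def fac_def lessThan_Suc_atMost)
  then have "(\<lambda>n. qpoch (-(x^2)) (q^2) n) \<longlonglongrightarrow> prodinf (fac q x)"
    by (rule LIMSEQ_imp_Suc)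
  then show ?thesis unfolding qpoch_inf_def by (rule limI)
qed

lemma fac_nonzero:
  assumes q: "0 < q" "q < 1" and x: "x \<in> strip"
  shows "fac q x j \<noteq> 0"
proof -
  have "\<bar>Im x\<bar> < 1" using x by (simp add: strip_def)
  then have "(Im x)^2 < 1" by (simp add: abs_square_less_1)
  have qj: "0 < (q^2)^j" "(q^2)^j \<le> 1" using q by (auto simp: power_le_one)
  have "Re (fac q x j) = 1 + (q^2)^j * ((Re x)^2 - (Im x)^2)"
    by (simp add: fac_def power2_eq_square algebra_simps)
  also have "\<dots> > 0"
  proof -
    have "(q^2)^j * ((Re x)^2 - (Im x)^2) = (q^2)^j * (Re x)^2 - (q^2)^j * (Im x)^2"
      by (simp add: right_diff_distrib)
    moreover have "(q^2)^j * (Re x)^2 \<ge> 0" using qj by simp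
    moreover have "(q^2)^j * (Im x)^2 \<le> (Im x)^2"
      by (rule mult_left_le_one_le) (use qj in auto)
    ultimately show ?thesis using \<open>(Im x)^2 < 1\<close> by linarith
  qed
  finally show ?thesis by auto
qed

definition Gf :: "real \<Rightarrow> complex \<Rightarrow> complex" where
  "Gf q x = qexp (q^2) (-(x^2))"

lemma Gf_eq: "0 < q \<Longrightarrow> q < 1 \<Longrightarrow> Gf q x = 1 / prodinf (fac q x)"
  by (simp add: Gf_def qexp_def qpoch_inf_eq)

lemma Gf_nonzero: "0 < q \<Longrightarrow> q < 1 \<Longrightarrow> x \<in> strip \<Longrightarrow> Gf q x \<noteq> 0"
  using prodinf_nonzero[OF fac_convergent fac_nonzero] by (simp add: Gf_eq)

lemma prodinf_fac_shift:
  assumes q: "0 < q" "q < 1"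
  shows "prodinf (fac q x) = (1 + x^2) * prodinf (fac q (complex_of_real q * x))"
proof -
  have A: "(\<lambda>n. \<Prod>i\<le>n. fac q x i) \<longlonglongrightarrow> prodinf (fac q x)"
    by (rule convergent_prod_LIMSEQ[OF fac_convergent[OF q]])
  have B: "(\<lambda>n. \<Prod>i\<le>n. fac q (complex_of_real q * x) i) \<longlonglongrightarrow> prodinf (fac q (complex_of_real q * x))"
    by (rule convergent_prod_LIMSEQ[OF fac_convergent[OF q]])
  have eq: "(\<Prod>i\<le>Suc n. fac q x i) = (1 + x^2) * (\<Prod>i\<le>n. fac q (complex_of_real q * x) i)" for n
  proof -
    have "(\<Prod>i\<le>Suc n. fac q x i) = fac q x 0 * (\<Prod>i\<le>n. fac q x (Suc i))"
      by (subst prod.atMost_Suc_shift) simp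
    moreover have "fac q x (Suc i) = fac q (complex_of_real q * x) i" for i
      by (simp add: fac_def power_mult_distrib mult_ac)
    moreover have "fac q x 0 = 1 + x^2" by (simp add: fac_def)
    ultimately show ?thesis by simp
  qed
  have "(\<lambda>n. \<Prod>i\<le>Suc n. fac q x i) \<longlonglongrightarrow> (1 + x^2) * prodinf (fac q (complex_of_real q * x))"
    unfolding eq by (intro tendsto_mult tendsto_const B)
  moreover have "(\<lambda>n. \<Prod>i\<le>Suc n. fac q x i) \<longlonglongrightarrow> prodinf (fac q x)"
    using A by (rule LIMSEQ_Suc)
  ultimately show ?thesis using LIMSEQ_unique by blast
qed

lemma strip_mult_q: "0 < q \<Longrightarrow> q < 1 \<Longrightarrow> x \<in> strip \<Longrightarrow> complex_of_real q * x \<in> strip"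
  by (simp add: strip_def abs_mult) (smt (verit) mult_less_cancel_right1 mult_nonneg_nonneg abs_ge_zero)

lemma Gf_shift:
  assumes q: "0 < q" "q < 1" and x: "x \<in> strip"
  shows "Gf q (complex_of_real q * x) = (1 + x^2) * Gf q x"
proof -
  have nz: "prodinf (fac q x) \<noteq> 0" using prodinf_nonzero[OF fac_convergent[OF q] fac_nonzero[OF q x]] .
  have nz2: "prodinf (fac q (complex_of_real q * x)) \<noteq> 0"
    using prodinf_nonzero[OF fac_convergent[OF q] fac_nonzero[OF q strip_mult_q[OF q x]]] .
  show ?thesis using prodinf_fac_shift[OF q, of x] nz nz2 by (simp add: Gf_eq[OF q] field_simps)
qed

definition ev :: "(nat \<Rightarrow> complex) \<Rightarrow> complex \<Rightarrow> complex" where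
  "ev b x = (\<Sum>n. b n * x^n)"

definition Tco :: "real \<Rightarrow> (nat \<Rightarrow> complex) \<Rightarrow> nat \<Rightarrow> complex" where
  "Tco q b n = complex_of_real ((1 - q^(Suc n))/(1-q)) * b (Suc n)
      - (if n = 0 then 0 else complex_of_real (q^(n-1)/(1-q)) * b (n-1))"

definition ccls :: "real \<Rightarrow> real \<Rightarrow> real \<Rightarrow> (nat \<Rightarrow> complex) \<Rightarrow> bool" where
  "ccls r \<sigma> C b \<longleftrightarrow> (\<forall>n. norm (b n) \<le> C * \<sigma>^n * r^(n^2))"

lemma ccls_C: "ccls r \<sigma> C b \<Longrightarrow> C \<ge> 0"
  unfolding ccls_def by (metis norm_ge_zero order_trans power_0 mult_1_right zero_power2)

lemma ccls_summable:
  assumes r: "0 < r" "r < 1" and s: "0 \<le> \<sigma>" and c: "ccls r \<sigma> C b"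
  shows "summable (\<lambda>n. norm (b n * x^n))"
proof (rule summable_comparison_test'[OF summable_mult[OF geo_quad_summable[OF r, of "\<sigma> * norm x"], of C]])
  fix n
  have "norm (b n * x^n) = norm (b n) * norm x ^ n" by (simp add: norm_mult norm_power)
  also have "\<dots> \<le> C * \<sigma>^n * r^(n^2) * norm x ^ n"
    using c unfolding ccls_def by (intro mult_right_mono) auto
  also have "\<dots> = C * ((\<sigma> * norm x)^n * r^(n^2))" by (simp add: power_mult_distrib mult_ac)
  finally show "norm (norm (b n * x^n)) \<le> C * ((\<sigma> * norm x)^n * r^(n^2))" by simp
qed (use s in simp)

lemma ccls_summable':
  assumes r: "0 < r" "r < 1" and s: "0 \<le> \<sigma>" and c: "ccls r \<sigma> C b"
  shows "summable (\<lambda>n. b n * x^n)"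
  using summable_norm_cancel[OF ccls_summable[OF assms]] .

lemma sq_Suc: "r^((Suc n)^2) = r^(n^2) * r^(2*n) * (r::real)"
proof -
  have "(Suc n)^2 = n^2 + 2*n + 1" by (simp add: power2_eq_square)
  then show ?thesis by (simp add: power_add)
qed

lemma Tco_ccls:
  assumes r: "0 < r" "r < 1" and q: "q = r^2" and s: "0 < \<sigma>" and c: "ccls r \<sigma> C b"
  shows "ccls r \<sigma> (C * ((\<sigma>*r + 1/(\<sigma>*r))/(1-q))) (Tco q b)"
  unfolding ccls_def
proof
  fix n
  have C0: "C \<ge> 0" using ccls_C[OF c] .
  have q01: "0 < q" "q < 1" using r q by (auto simp: power_less_one_iff)
  define P where "P n = C * \<sigma>^n * r^(n^2)" for n
  have P0: "P n \<ge> 0" for n using C0 s r by (simp add: P_def)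
  have bP: "norm (b n) \<le> P n" for n using c by (simp add: ccls_def P_def)
  have A: "norm (complex_of_real ((1 - q^(Suc n))/(1-q)) * b (Suc n)) \<le> P n * (\<sigma>*r/(1-q))"
  proof -
    have "norm (complex_of_real ((1 - q^(Suc n))/(1-q)) * b (Suc n)) = \<bar>(1 - q^(Suc n))/(1-q)\<bar> * norm (b (Suc n))"
      by (simp only: norm_mult norm_of_real)
    also have "\<dots> = (1 - q^(Suc n))/(1-q) * norm (b (Suc n))"
    proof -
      have "q^(Suc n) \<le> 1" using q01 by (intro power_le_one) auto
      then show ?thesis using q01 by (subst abs_of_nonneg) (auto intro: divide_nonneg_nonneg)
    qed
    also have "\<dots> \<le> 1/(1-q) * P (Suc n)"
      using q01 bP[of "Suc n"] by (intro mult_mono) (auto intro!: divide_right_mono)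
    also have "\<dots> = P n * (\<sigma> * r^(2*n) * r /(1-q))"
      by (simp add: P_def sq_Suc)
    also have "\<dots> \<le> P n * (\<sigma> * r /(1-q))"
      using P0 q01 s r by (intro mult_left_mono divide_right_mono) (auto simp: power_le_one)
    finally show ?thesis by simp
  qed
  have B: "norm (if n = 0 then 0 else complex_of_real (q^(n-1)/(1-q)) * b (n-1)) \<le> P n * (1/(\<sigma>*r)/(1-q))"
  proof (cases n)
    case 0 then show ?thesis using P0 q01 s r by simp
  next
    case (Suc m)
    have "norm (complex_of_real (q^m/(1-q)) * b m) = \<bar>q^m/(1-q)\<bar> * norm (b m)"
      by (simp only: norm_mult norm_of_real)
    also have "\<dots> = q^m/(1-q) * norm (b m)" using q01 by (subst abs_of_nonneg) auto
    also have "\<dots> \<le> q^m/(1-q) * P m"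
      using q01 bP[of m] by (intro mult_left_mono) auto
    also have "\<dots> = P (Suc m) * (1/(\<sigma>*r)/(1-q))"
      using s r q01 by (simp add: P_def sq_Suc q power_mult[symmetric] field_simps)
    finally show ?thesis using Suc by simp
  qed
  have "norm (Tco q b n) \<le> P n * (\<sigma>*r/(1-q)) + P n * (1/(\<sigma>*r)/(1-q))"
    unfolding Tco_def using A B norm_triangle_ineq4 order_trans add_mono by blast
  also have "\<dots> = C * ((\<sigma>*r + 1/(\<sigma>*r))/(1-q)) * \<sigma>^n * r^(n^2)"
    using s r q01 by (simp add: P_def add_divide_distrib distrib_left distrib_right)
  finally show "norm (Tco q b n) \<le> C * ((\<sigma>*r + 1/(\<sigma>*r))/(1-q)) * \<sigma>^n * r^(n^2)" .
qed

lemma ev_Tco: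
  assumes q: "0 < q" "q < 1" and x: "x \<noteq> 0" and sm: "\<And>y. summable (\<lambda>n. b n * y^n)"
  shows "complex_of_real (1-q) * x * ev (Tco q b) x = ev b x - (1 + x^2) * ev b (complex_of_real q * x)"
proof -
  let ?qx = "complex_of_real q * x"
  have S1: "(\<lambda>n. b n * x^n) sums ev b x" unfolding ev_def by (rule summable_sums[OF sm])
  have S2: "(\<lambda>n. b n * ?qx^n) sums ev b ?qx" unfolding ev_def by (rule summable_sums[OF sm])
  define D where "D n = b n * x^n - b n * ?qx^n" for n
  have "D sums (ev b x - ev b ?qx)" unfolding D_def by (rule sums_diff[OF S1 S2])
  then have SD: "(\<lambda>n. D (Suc n)) sums (ev b x - ev b ?qx)"
    by (subst sums_Suc_iff) (simp add: D_def)
  define E where "E n = (if n = 0 then 0 else complex_of_real (1-q) * x * (complex_of_real (q^(n-1)/(1-q)) * b (n-1)) * x^n)" for n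
  have "(\<lambda>n. x^2 * (b n * ?qx^n)) sums (x^2 * ev b ?qx)" by (rule sums_mult[OF S2])
  moreover have "E (Suc n) = x^2 * (b n * ?qx^n)" for n
    using q by (simp add: E_def power_mult_distrib power2_eq_square field_simps)
  ultimately have "(\<lambda>n. E (Suc n)) sums (x^2 * ev b ?qx)" by simp
  then have SE: "E sums (x^2 * ev b ?qx)" by (subst (asm) sums_Suc_iff) (simp add: E_def)
  have eq: "complex_of_real (1-q) * x * (Tco q b n * x^n) = D (Suc n) - E n" for n
  proof -
    let ?A = "complex_of_real ((1 - q^(Suc n))/(1-q)) * b (Suc n)"
    let ?I = "(if n = 0 then 0 else complex_of_real (q^(n-1)/(1-q)) * b (n-1))"
    have f: "complex_of_real (1-q) * complex_of_real ((1 - q^(Suc n))/(1-q)) = complex_of_real (1 - q^(Suc n))"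
      using q by (simp flip: of_real_mult)
    have "complex_of_real (1-q) * x * (?A * x^n) = (complex_of_real (1-q) * complex_of_real ((1 - q^(Suc n))/(1-q))) * (b (Suc n) * x^(Suc n))"
      by (simp add: mult_ac)
    also have "\<dots> = complex_of_real (1 - q^(Suc n)) * (b (Suc n) * x^(Suc n))" by (simp only: f)
    also have "\<dots> = D (Suc n)" by (simp add: D_def power_mult_distrib algebra_simps)
    finally have P1: "complex_of_real (1-q) * x * (?A * x^n) = D (Suc n)" .
    have P2: "complex_of_real (1-q) * x * (?I * x^n) = E n"
      by (cases "n = 0") (simp_all add: E_def mult_ac)
    have "complex_of_real (1-q) * x * (Tco q b n * x^n) = complex_of_real (1-q) * x * (?A * x^n) - complex_of_real (1-q) * x * (?I * x^n)"
      unfolding Tco_def by (simp only: left_diff_distrib right_diff_distrib)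
    then show ?thesis using P1 P2 by simp
  qed
  have "(\<lambda>n. complex_of_real (1-q) * x * (Tco q b n * x^n)) sums ((ev b x - ev b ?qx) - x^2 * ev b ?qx)"
    unfolding eq by (rule sums_diff[OF SD SE])
  then have "(\<lambda>n. Tco q b n * x^n) sums (((ev b x - ev b ?qx) - x^2 * ev b ?qx) / (complex_of_real (1-q) * x))"
    by (rule sums_mult_D) (use q x in simp)
  then have "ev (Tco q b) x = ((ev b x - ev b ?qx) - x^2 * ev b ?qx) / (complex_of_real (1-q) * x)"
    unfolding ev_def by (rule sums_unique[symmetric])
  then show ?thesis using q x by (simp add: field_simps)
qed

definition xk :: "real \<Rightarrow> real \<Rightarrow> nat \<Rightarrow> complex" where
  "xk q \<epsilon> k = complex_of_real (\<epsilon> / q^k) * \<i>"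

definition Tch :: "real \<Rightarrow> real \<Rightarrow> (nat \<Rightarrow> complex) \<Rightarrow> nat \<Rightarrow> complex" where
  "Tch q \<epsilon> w k = (w k - complex_of_real (1 - 1/q^(2*k)) * w (k-1)) / (complex_of_real (1-q) * xk q \<epsilon> k)"

definition dl :: "real \<Rightarrow> real \<Rightarrow> nat \<Rightarrow> complex" where
  "dl q \<epsilon> k = 1 / (complex_of_real (1-q) * xk q \<epsilon> k)"

definition chc :: "real \<Rightarrow> real \<Rightarrow> real \<Rightarrow> (nat \<Rightarrow> complex) \<Rightarrow> bool" where
  "chc r \<sigma> K w \<longleftrightarrow> (\<forall>k. norm (w k) \<le> K * \<sigma>^k / r^(k^2))"

definition Mop :: "(nat \<Rightarrow> complex) \<Rightarrow> ((nat \<Rightarrow> complex) \<Rightarrow> nat \<Rightarrow> complex) \<Rightarrow> (nat \<Rightarrow> complex) \<Rightarrow> nat \<Rightarrow> complex" where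
  "Mop m T u k = (\<Sum>e. m e * (T ^^ e) u k)"

locale chainloc =
  fixes q \<epsilon> :: real
  assumes q0: "0 < q" and q1: "q < 1" and eps: "\<epsilon> = 1 \<or> \<epsilon> = -1"
begin

lemma eps_sq: "\<epsilon>^2 = 1" and eps_abs: "\<bar>\<epsilon>\<bar> = 1" using eps by auto

lemma xk_nz: "xk q \<epsilon> k \<noteq> 0"
  using eps q0 by (auto simp: xk_def)

lemma norm_xk: "norm (xk q \<epsilon> k) = 1 / q^k"
  using eps q0 by (auto simp: xk_def norm_mult norm_divide norm_power)

lemma xk_shift: "k \<ge> 1 \<Longrightarrow> complex_of_real q * xk q \<epsilon> k = xk q \<epsilon> (k-1)"
proof -
  assume "k \<ge> 1"
  then obtain j where "k = Suc j" by (cases k) auto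
  then show ?thesis using q0 by (simp add: xk_def field_simps)
qed

lemma xk_sq: "1 + (xk q \<epsilon> k)^2 = complex_of_real (1 - 1/q^(2*k))"
proof -
  have "(xk q \<epsilon> k)^2 = complex_of_real ((\<epsilon> / q^k)^2) * \<i>^2"
    by (simp only: xk_def power_mult_distrib of_real_power)
  moreover have "(\<epsilon> / q^k)^2 = 1 / q^(2*k)"
    using eps_sq by (simp add: power_divide power_mult[symmetric] mult.commute)
  ultimately show ?thesis by simp
qed

lemma ev_chain:
  assumes sm: "\<And>y. summable (\<lambda>n. b n * y^n)"
  shows "ev (Tco q b) (xk q \<epsilon> k) = Tch q \<epsilon> (\<lambda>j. ev b (xk q \<epsilon> j)) k"
proof -
  have e: "complex_of_real (1-q) * xk q \<epsilon> k * ev (Tco q b) (xk q \<epsilon> k)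
      = ev b (xk q \<epsilon> k) - (1 + (xk q \<epsilon> k)^2) * ev b (complex_of_real q * xk q \<epsilon> k)"
    by (rule ev_Tco[OF q0 q1 xk_nz sm])
  have "(1 + (xk q \<epsilon> k)^2) * ev b (complex_of_real q * xk q \<epsilon> k)
      = complex_of_real (1 - 1/q^(2*k)) * ev b (xk q \<epsilon> (k-1))"
  proof (cases "k = 0")
    case True then show ?thesis by (simp add: xk_sq)
  next
    case False then show ?thesis by (simp add: xk_sq xk_shift)
  qed
  note eq2 = this
  have Z: "complex_of_real (1-q) * xk q \<epsilon> k \<noteq> 0" using xk_nz q1 by simp
  show ?thesis unfolding Tch_def
    by (subst nonzero_eq_divide_eq[OF Z]) (metis e eq2 mult.commute)
qed

lemma Tch_lin: "Tch q \<epsilon> (\<lambda>k. v k - d * w k) k = Tch q \<epsilon> v k - d * Tch q \<epsilon> w k"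
proof -
  let ?c = "complex_of_real (1 - 1/q^(2*k))"
  have "v k - d * w k - ?c * (v (k-1) - d * w (k-1)) = (v k - ?c * v (k-1)) - d * (w k - ?c * w (k-1))"
    by (simp add: algebra_simps)
  then show ?thesis unfolding Tch_def by (simp only: diff_divide_distrib times_divide_eq_right right_diff_distrib)
qed

lemma Tch_funpow_comm:
  "(Tch q \<epsilon> ^^ e) (\<lambda>k. Tch q \<epsilon> u k - d * u k) = (\<lambda>k. Tch q \<epsilon> ((Tch q \<epsilon> ^^ e) u) k - d * (Tch q \<epsilon> ^^ e) u k)"
proof (induction e)
  case 0 then show ?case by simp
next
  case (Suc e)
  show ?case by (rule ext) (simp add: Suc Tch_lin)
qed

lemma vanish_below:
  assumes "\<forall>j<k. u j = 0"
  shows "(\<forall>j<k. (Tch q \<epsilon> ^^ e) u j = 0) \<and> (Tch q \<epsilon> ^^ e) u k = dl q \<epsilon> k ^ e * u k"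
proof (induction e)
  case 0 then show ?case using assms by simp
next
  case (Suc e)
  let ?v = "(Tch q \<epsilon> ^^ e) u"
  have v0: "\<forall>j<k. ?v j = 0" and vk: "?v k = dl q \<epsilon> k ^ e * u k" using Suc by auto
  have "\<forall>j<k. Tch q \<epsilon> ?v j = 0"
  proof (intro allI impI)
    fix j assume "j < k"
    then have "?v j = 0" "?v (j-1) = 0" using v0 by auto
    then show "Tch q \<epsilon> ?v j = 0" by (simp add: Tch_def)
  qed
  moreover have "Tch q \<epsilon> ?v k = dl q \<epsilon> k * ?v k"
  proof (cases "k = 0")
    case True then show ?thesis by (simp add: Tch_def dl_def)
  next
    case False then have "?v (k-1) = 0" using v0 by auto
    then show ?thesis by (simp add: Tch_def dl_def)
  qed
  ultimately show ?case using vk by simp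
qed

lemma norm_Tch: "norm (Tch q \<epsilon> w k) = norm (w k - complex_of_real (1 - 1/q^(2*k)) * w (k-1)) * q^k / (1-q)"
  unfolding Tch_def norm_divide norm_mult norm_of_real norm_xk using q0 q1 by simp

lemma chc_K: "chc r \<sigma> K w \<Longrightarrow> K \<ge> 0"
  unfolding chc_def by (metis div_by_1 norm_ge_zero order_trans power_0 mult_1_right zero_power2)

lemma Tch_chc:
  assumes r: "0 < r" "r^2 = q" and s: "0 < \<sigma>" and c: "chc r \<sigma> K w"
  shows "chc r \<sigma> (K * ((1 + 1/(r*\<sigma>))/(1-q))) (Tch q \<epsilon> w)"
  unfolding chc_def
proof
  fix k
  have K0: "K \<ge> 0" using chc_K[OF c] .
  define P where "P k = K * \<sigma>^k / r^(k^2)" for k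
  have wP: "norm (w k) \<le> P k" for k using c by (simp add: chc_def P_def)
  have P0: "P k \<ge> 0" for k using K0 s r by (simp add: P_def)
  have qk: "q^k \<le> 1" "0 < q^k" using q0 q1 by (auto simp: power_le_one)
  have main: "norm (w k - complex_of_real (1 - 1/q^(2*k)) * w (k-1)) * q^k \<le> P k * (1 + 1/(r*\<sigma>))"
  proof (cases k)
    case 0
    have "norm (w k - complex_of_real (1 - 1/q^(2*k)) * w (k-1)) * q^k = norm (w 0)" using 0 by simp
    also have "\<dots> \<le> P 0" by (rule wP)
    also have "\<dots> \<le> P 0 * (1 + 1/(r*\<sigma>))" using P0[of 0] r s by (simp add: mult_le_cancel_left1)
    finally show ?thesis using 0 by simp
  next
    case (Suc m)
    have cabs: "norm (complex_of_real (1 - 1/q^(2*k))) \<le> 1/q^(2*k)"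
    proof -
      have "q^(2*k) \<le> 1" "0 < q^(2*k)" using q0 q1 by (auto simp: power_le_one)
      then have "1 \<le> 1/q^(2*k)" by simp
      then show ?thesis by (simp only: norm_of_real)
    qed
    have "norm (w k - complex_of_real (1 - 1/q^(2*k)) * w (k-1)) * q^k
        \<le> (norm (w k) + 1/q^(2*k) * norm (w m)) * q^k"
    proof -
      have "norm (w k - complex_of_real (1 - 1/q^(2*k)) * w (k-1)) \<le> norm (w k) + norm (complex_of_real (1 - 1/q^(2*k)) * w (k-1))"
        by (rule norm_triangle_ineq4)
      also have "\<dots> = norm (w k) + norm (complex_of_real (1 - 1/q^(2*k))) * norm (w m)"
        by (simp only: norm_mult Suc diff_Suc_1)
      also have "\<dots> \<le> norm (w k) + 1/q^(2*k) * norm (w m)"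
        using cabs by (intro add_left_mono mult_right_mono) auto
      finally show ?thesis using qk by (intro mult_right_mono) auto
    qed
    also have "\<dots> = norm (w k) * q^k + norm (w m) / q^k"
    proof -
      have qq: "q^(2*k) = q^k * q^k" "q^(k*2) = q^k * q^k" by (simp_all add: power_add[symmetric] mult_2 mult_2_right)
      show ?thesis using qk by (simp add: qq field_simps)
    qed
    also have "\<dots> \<le> P k * 1 + P m / q^k"
      using wP[of k] wP[of m] qk norm_ge_zero[of "w k"]
      by (intro add_mono divide_right_mono) (auto intro: mult_le_one order_trans[OF mult_right_le_one_le])
    also have "P m / q^k = P k * (1/(r*\<sigma>))"
      using r s Suc by (simp add: P_def sq_Suc power_mult[symmetric] flip: r(2)) (simp add: field_simps power_mult_distrib power_add mult_2 power2_eq_square)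
    finally show ?thesis by (simp add: distrib_left)
  qed
  have "norm (Tch q \<epsilon> w k) \<le> P k * (1 + 1/(r*\<sigma>)) / (1-q)"
    using main q1 by (simp add: norm_Tch divide_right_mono)
  also have "P k * (1 + 1/(r*\<sigma>)) / (1-q) = K * ((1 + 1/(r*\<sigma>))/(1-q)) * \<sigma>^k / r^(k^2)"
    by (simp add: P_def mult_ac)
  finally show "norm (Tch q \<epsilon> w k) \<le> K * ((1 + 1/(r*\<sigma>))/(1-q)) * \<sigma>^k / r^(k^2)" .
qed

end

context chainloc begin

lemma funpow_chc:
  assumes r: "0 < r" "r^2 = q" and s: "0 < \<sigma>" and c: "chc r \<sigma> K u"
  shows "chc r \<sigma> (K * ((1 + 1/(r*\<sigma>))/(1-q))^e) ((Tch q \<epsilon> ^^ e) u)"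
proof (induction e)
  case 0 then show ?case using c by simp
next
  case (Suc e)
  show ?case using Tch_chc[OF r s Suc] by (simp add: mult_ac)
qed

lemma sub_chc:
  assumes r: "0 < r" "r^2 = q" and s: "0 < \<sigma>" and c: "chc r \<sigma> K u"
  shows "chc r \<sigma> (K * ((1 + 1/(r*\<sigma>))/(1-q)) + norm d * K) (\<lambda>k. Tch q \<epsilon> u k - d * u k)"
  unfolding chc_def
proof
  fix k
  have "norm (Tch q \<epsilon> u k - d * u k) \<le> norm (Tch q \<epsilon> u k) + norm d * norm (u k)"
    using norm_triangle_ineq4[of "Tch q \<epsilon> u k" "d * u k"] by (simp add: norm_mult)
  also have "\<dots> \<le> K * ((1 + 1/(r*\<sigma>))/(1-q)) * \<sigma>^k / r^(k^2) + norm d * (K * \<sigma>^k / r^(k^2))"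
    using Tch_chc[OF r s c] c unfolding chc_def by (intro add_mono mult_left_mono) auto
  also have "\<dots> = (K * ((1 + 1/(r*\<sigma>))/(1-q)) + norm d * K) * \<sigma>^k / r^(k^2)"
    using r s q1 by (simp add: field_simps)
  finally show "norm (Tch q \<epsilon> u k - d * u k) \<le> (K * ((1 + 1/(r*\<sigma>))/(1-q)) + norm d * K) * \<sigma>^k / r^(k^2)" .
qed

lemma Mop_summable:
  assumes r: "0 < r" "r^2 = q" and s: "0 < \<sigma>" and c: "chc r \<sigma> K u"
    and ms: "\<And>c. c \<ge> 0 \<Longrightarrow> summable (\<lambda>e. norm (m e) * c^e)"
  shows "summable (\<lambda>e. m e * (Tch q \<epsilon> ^^ e) u k)"
proof -
  let ?c = "(1 + 1/(r*\<sigma>))/(1-q)"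
  have c0: "?c \<ge> 0" using r s q1 by simp
  have S: "summable (\<lambda>e. norm (m e) * ?c^e * (K * \<sigma>^k / r^(k^2)))"
    by (rule summable_mult2[OF ms[OF c0]])
  have B: "norm (m e * (Tch q \<epsilon> ^^ e) u k) \<le> norm (m e) * ?c^e * (K * \<sigma>^k / r^(k^2))" for e
  proof -
    have "norm ((Tch q \<epsilon> ^^ e) u k) \<le> K * ?c^e * \<sigma>^k / r^(k^2)"
      using funpow_chc[OF r s c, of e] unfolding chc_def by blast
    then have "norm (m e) * norm ((Tch q \<epsilon> ^^ e) u k) \<le> norm (m e) * (K * ?c^e * \<sigma>^k / r^(k^2))"
      by (rule mult_left_mono) simp
    also have "\<dots> = norm (m e) * ?c^e * (K * \<sigma>^k / r^(k^2))" by (simp add: mult_ac)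
    finally show ?thesis by (simp add: norm_mult)
  qed
  show ?thesis by (rule summable_comparison_test'[OF S B])
qed

lemma Mop_sub:
  assumes r: "0 < r" "r^2 = q" and s: "0 < \<sigma>" and c: "chc r \<sigma> K u"
    and ms: "\<And>c. c \<ge> 0 \<Longrightarrow> summable (\<lambda>e. norm (m e) * c^e)"
  shows "Mop m (Tch q \<epsilon>) (\<lambda>k. Tch q \<epsilon> u k - d * u k) k
       = Tch q \<epsilon> (Mop m (Tch q \<epsilon>) u) k - d * Mop m (Tch q \<epsilon>) u k"
proof -
  let ?A = "\<lambda>e. (Tch q \<epsilon> ^^ e) u"
  let ?c = "complex_of_real (1 - 1/q^(2*k))"
  let ?Z = "complex_of_real (1-q) * xk q \<epsilon> k"
  have S0: "(\<lambda>e. m e * ?A e k) sums Mop m (Tch q \<epsilon>) u k"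
    unfolding Mop_def by (rule summable_sums[OF Mop_summable[OF r s c ms]])
  have S1: "(\<lambda>e. m e * ?A e (k-1)) sums Mop m (Tch q \<epsilon>) u (k-1)"
    unfolding Mop_def by (rule summable_sums[OF Mop_summable[OF r s c ms]])
  have "(\<lambda>e. (m e * ?A e k - ?c * (m e * ?A e (k-1))) / ?Z - d * (m e * ?A e k)) sums
        ((Mop m (Tch q \<epsilon>) u k - ?c * Mop m (Tch q \<epsilon>) u (k-1)) / ?Z - d * Mop m (Tch q \<epsilon>) u k)"
    by (intro sums_diff sums_divide sums_mult S0 S1)
  moreover have "(m e * ?A e k - ?c * (m e * ?A e (k-1))) / ?Z - d * (m e * ?A e k)
      = m e * (Tch q \<epsilon> (?A e) k - d * ?A e k)" for e
    unfolding Tch_def by (simp add: algebra_simps diff_divide_distrib)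
  ultimately have "(\<lambda>e. m e * (Tch q \<epsilon> (?A e) k - d * ?A e k)) sums
        ((Mop m (Tch q \<epsilon>) u k - ?c * Mop m (Tch q \<epsilon>) u (k-1)) / ?Z - d * Mop m (Tch q \<epsilon>) u k)"
    by simp
  then show ?thesis unfolding Mop_def Tch_funpow_comm
    by (simp add: sums_unique[symmetric] Tch_def)
qed

end

context chainloc begin

lemma eig:
  assumes r: "0 < r" "r^2 = q" and s: "0 < \<sigma>" "r * \<sigma> < 1" and c: "chc r \<sigma> K u"
    and ev: "\<And>k. Tch q \<epsilon> u k = dl q \<epsilon> p * u k"
  shows "u k = 0"
proof -
  define cc where "cc k = 1 - 1/q^(2*k)" for k :: nat
  have Z: "complex_of_real (1-q) * xk q \<epsilon> j \<noteq> 0" for j using xk_nz q1 by simp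
  have xr: "xk q \<epsilon> j / xk q \<epsilon> p = complex_of_real (q^p / q^j)" for j
    using eps q0 by (auto simp: xk_def)
  have rec: "u j * complex_of_real (1 - q^p/q^j) = complex_of_real (cc j) * u (j-1)" for j
  proof -
    have "(u j - complex_of_real (cc j) * u (j-1)) / (complex_of_real (1-q) * xk q \<epsilon> j)
        = u j / (complex_of_real (1-q) * xk q \<epsilon> p)"
      using ev[of j] by (simp add: Tch_def dl_def cc_def)
    then have "u j - complex_of_real (cc j) * u (j-1) = u j * ((complex_of_real (1-q) * xk q \<epsilon> j) / (complex_of_real (1-q) * xk q \<epsilon> p))"
      using Z[of j] Z[of p] by (simp add: field_simps)
    also have "(complex_of_real (1-q) * xk q \<epsilon> j) / (complex_of_real (1-q) * xk q \<epsilon> p) = complex_of_real (q^p / q^j)"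
      using xr[of j] q1 by simp
    finally show ?thesis by (simp add: algebra_simps)
  qed
  have qp: "0 < q^j" "q^j \<le> 1" for j using q0 q1 by (auto simp: power_le_one)
  have cc0: "cc 0 = 0" by (simp add: cc_def)
  have ccnz: "cc j \<noteq> 0" if "j \<ge> 1" for j
  proof -
    have "q^(2*j) < 1" using that q0 q1 by (simp add: power_less_one_iff)
    then show ?thesis using qp[of "2*j"] by (simp add: cc_def)
  qed
  have below: "u j = 0" if "j < p" for j
    using that
  proof (induction j)
    case 0
    have "q^p < 1" using 0 q0 q1 by (simp add: power_less_one_iff)
    then have "complex_of_real q ^ p \<noteq> 1" by (metis of_real_eq_1_iff of_real_power less_irrefl)
    then show ?case using rec[of 0] cc0 by simp
  next
    case (Suc j)
    have "q^p < q^(Suc j)" using Suc.prems q0 q1 by (intro power_strict_decreasing) auto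
    then have "q^p / q^(Suc j) \<noteq> 1" using qp by auto
    then have "1 - q^p/q^(Suc j) \<noteq> 0" by simp
    then have X: "complex_of_real (1 - q^p/q^(Suc j)) \<noteq> 0" using of_real_eq_0_iff by blast
    have uj: "u j = 0" using Suc by simp
    have "u (Suc j) * complex_of_real (1 - q^p/q^(Suc j)) = 0" using rec[of "Suc j"] uj by (metis diff_Suc_1 mult_zero_right)
    then show ?case using X by (metis mult_eq_0_iff)
  qed
  have grow: "norm (u j) \<ge> (1/q^j - q^j) * norm (u (j-1))" if "j > p" for j
  proof -
    have "q^j < q^p" using that q0 q1 by (intro power_strict_decreasing) auto
    then have R1: "q^p / q^j > 1" using qp by simp
    have R2: "q^p / q^j \<le> 1 / q^j" using qp[of p] qp[of j] by (intro divide_right_mono) auto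
    have "norm (u j) * \<bar>1 - q^p/q^j\<bar> = \<bar>cc j\<bar> * norm (u (j-1))"
      using arg_cong[OF rec[of j], of norm] by (simp only: norm_mult norm_of_real mult.commute)
    moreover have "\<bar>1 - q^p/q^j\<bar> \<le> 1/q^j" using R1 R2 by simp
    moreover have "\<bar>cc j\<bar> = 1/q^(2*j) - 1"
    proof -
      have "q^(2*j) \<le> 1" using qp by (simp add: power_le_one q0 q1 less_imp_le)
      then have "1 \<le> 1/q^(2*j)" using qp[of "2*j"] by simp
      then show ?thesis by (simp add: cc_def)
    qed
    ultimately have "(1/q^(2*j) - 1) * norm (u (j-1)) \<le> norm (u j) * (1/q^j)"
      by (metis mult_left_mono norm_ge_zero)
    then have "q^j * ((1/q^(2*j) - 1) * norm (u (j-1))) \<le> q^j * (norm (u j) * (1/q^j))"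
      using qp[of j] by (intro mult_left_mono) auto
    also have "q^j * (norm (u j) * (1/q^j)) = norm (u j)" using q0 by simp
    finally have "q^j * ((1/q^(2*j) - 1) * norm (u (j-1))) \<le> norm (u j)" .
    moreover have "q^j * (1/q^(2*j) - 1) = 1/q^j - q^j"
    proof -
      have qq: "q^(2*j) = q^j * q^j" "q^(j*2) = q^j * q^j" by (simp_all add: power_add[symmetric] mult_2 mult_2_right)
      show ?thesis using qp[of j] by (simp add: qq field_simps)
    qed
    ultimately show ?thesis by (simp add: mult.assoc[symmetric])
  qed
  have nzprop: "u j \<noteq> 0 \<Longrightarrow> u (Suc j) \<noteq> 0" if "Suc j > p" for j
  proof -
    assume "u j \<noteq> 0"
    then have "complex_of_real (cc (Suc j)) * u j \<noteq> 0" using ccnz[of "Suc j"] by simp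
    then show ?thesis using rec[of "Suc j"] by auto
  qed
  define \<rho> where "\<rho> j = norm (u j) * r^(j^2) / \<sigma>^j" for j
  have \<rho>K: "\<rho> j \<le> K" for j
    using c s r unfolding chc_def \<rho>_def by (simp add: field_simps)
  have \<rho>0: "\<rho> j \<ge> 0" for j using r s by (simp add: \<rho>_def)
  have \<rho>grow: "\<rho> (Suc j) \<ge> (1 - q^(2*Suc j)) / (r*\<sigma>) * \<rho> j" if "Suc j > p" for j
  proof -
    have g: "norm (u (Suc j)) \<ge> (1/q^(Suc j) - q^(Suc j)) * norm (u j)" using grow[OF that] by simp
    have "\<rho> (Suc j) \<ge> (1/q^(Suc j) - q^(Suc j)) * norm (u j) * r^((Suc j)^2) / \<sigma>^(Suc j)"
      unfolding \<rho>_def using g r s by (intro divide_right_mono mult_right_mono) auto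
    moreover have "(1/q^(Suc j) - q^(Suc j)) * norm (u j) * r^((Suc j)^2) / \<sigma>^(Suc j)
        = (1 - q^(2*Suc j)) / (r*\<sigma>) * \<rho> j"
    proof -
      have qr: "q^(Suc j) = r^(2*j) * r^2" using r by (simp add: power_mult[symmetric] power_mult_distrib mult.commute power_add[symmetric] flip: r(2))
      have q2: "q^(2*Suc j) = q^(Suc j) * q^(Suc j)" by (simp add: power_add[symmetric] mult_2)
      have qrr: "q = r * r" using r(2) by (simp add: power2_eq_square)
      show ?thesis unfolding \<rho>_def sq_Suc q2 qr using r s
        by (simp add: field_simps power2_eq_square qrr)
    qed
    ultimately show ?thesis by simp
  qed
  show "u k = 0"
  proof (rule ccontr)
    assume uk: "u k \<noteq> 0"
    then have kp: "k \<ge> p" using below by (meson not_le)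
    define \<theta> where "\<theta> = 1/(r*\<sigma>)"
    have \<theta>1: "\<theta> > 1" using s r by (simp add: \<theta>_def)
    obtain J where J: "q^J < (\<theta>-1)/(2*\<theta>)"
      using real_arch_pow_inv[of "(\<theta>-1)/(2*\<theta>)" q] \<theta>1 q1 by auto
    have fac: "(1 - q^(2*j)) * \<theta> \<ge> (1+\<theta>)/2" if "j \<ge> J" for j
    proof -
      have "q^(2*j) \<le> q^J" using that q0 q1 by (intro power_decreasing) auto
      then have "q^(2*j) \<le> (\<theta>-1)/(2*\<theta>)" using J by simp
      then have "(1 - q^(2*j)) * \<theta> \<ge> (1 - (\<theta>-1)/(2*\<theta>)) * \<theta>" using \<theta>1 by (intro mult_right_mono) auto
      also have "(1 - (\<theta>-1)/(2*\<theta>)) * \<theta> = (1+\<theta>)/2" using \<theta>1 by (simp add: field_simps)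
      finally show ?thesis .
    qed
    have nz: "u (k + n) \<noteq> 0" for n
    proof (induction n)
      case 0 then show ?case using uk by simp
    next
      case (Suc n)
      have "Suc (k+n) > p" using kp by simp
      then show ?case using nzprop[of "k+n"] Suc by simp
    qed
    define k1 where "k1 = k + J"
    have \<rho>k1: "\<rho> k1 > 0" using nz[of J] r s by (simp add: \<rho>_def k1_def)
    have pw: "\<rho> (k1 + n) \<ge> ((1+\<theta>)/2)^n * \<rho> k1" for n
    proof (induction n)
      case 0 then show ?case by simp
    next
      case (Suc n)
      have "Suc (k1+n) > p" using kp by (simp add: k1_def)
      then have "\<rho> (Suc (k1+n)) \<ge> (1 - q^(2*Suc (k1+n))) / (r*\<sigma>) * \<rho> (k1+n)" by (rule \<rho>grow)
      moreover have "(1 - q^(2*Suc (k1+n))) / (r*\<sigma>) = (1 - q^(2*Suc (k1+n))) * \<theta>" by (simp add: \<theta>_def)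
      moreover have "(1 - q^(2*Suc (k1+n))) * \<theta> \<ge> (1+\<theta>)/2" by (rule fac) (simp add: k1_def)
      ultimately have "\<rho> (Suc (k1+n)) \<ge> (1+\<theta>)/2 * \<rho> (k1+n)"
        using \<rho>0[of "k1+n"] by (smt (verit) mult_right_mono)
      moreover have "(1+\<theta>)/2 * \<rho> (k1+n) \<ge> (1+\<theta>)/2 * (((1+\<theta>)/2)^n * \<rho> k1)"
        using Suc \<theta>1 by (intro mult_left_mono) auto
      ultimately show ?case by (simp add: mult.assoc)
    qed
    obtain n where n: "K / \<rho> k1 < ((1+\<theta>)/2)^n"
      using real_arch_pow[of "(1+\<theta>)/2" "K / \<rho> k1"] \<theta>1 by auto
    then have "K < ((1+\<theta>)/2)^n * \<rho> k1" using \<rho>k1 by (simp add: field_simps)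
    also have "\<dots> \<le> \<rho> (k1 + n)" by (rule pw)
    also have "\<dots> \<le> K" by (rule \<rho>K)
    finally show False by simp
  qed
qed

end

context chainloc begin

lemma chain_zero:
  assumes r: "0 < r" "r^2 = q" and s: "0 < \<sigma>" "r*\<sigma> < 1" and c: "chc r \<sigma> K w"
    and ms: "\<And>c. c \<ge> 0 \<Longrightarrow> summable (\<lambda>e. norm (m e) * c^e)"
    and M0: "\<And>k. Mop m (Tch q \<epsilon>) w k = 0"
    and N: "\<And>k. k \<ge> N \<Longrightarrow> (\<Sum>e. m e * dl q \<epsilon> k ^ e) \<noteq> 0"
  shows "w k = 0"
proof -
  define uu where "uu = rec_nat w (\<lambda>j u. (\<lambda>k. Tch q \<epsilon> u k - dl q \<epsilon> j * u k))"
  have uu0: "uu 0 = w" by (simp add: uu_def)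
  have uuS: "uu (Suc j) = (\<lambda>k. Tch q \<epsilon> (uu j) k - dl q \<epsilon> j * uu j k)" for j by (simp add: uu_def)
  have cls: "\<exists>K'. chc r \<sigma> K' (uu j)" for j
  proof (induction j)
    case 0 then show ?case using c uu0 by auto
  next
    case (Suc j)
    then obtain K' where "chc r \<sigma> K' (uu j)" by blast
    then show ?case unfolding uuS using sub_chc[OF r s(1)] by blast
  qed
  have Mz: "Mop m (Tch q \<epsilon>) (uu j) k = 0" for j k
  proof (induction j arbitrary: k)
    case 0 then show ?case using M0 by (simp add: uu0)
  next
    case (Suc j)
    obtain K' where K': "chc r \<sigma> K' (uu j)" using cls by blast
    have "Mop m (Tch q \<epsilon>) (uu (Suc j)) k = Tch q \<epsilon> (Mop m (Tch q \<epsilon>) (uu j)) k - dl q \<epsilon> j * Mop m (Tch q \<epsilon>) (uu j) k"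
      unfolding uuS by (rule Mop_sub[OF r s(1) K' ms])
    moreover have "Tch q \<epsilon> (Mop m (Tch q \<epsilon>) (uu j)) k = 0"
      by (simp only: Tch_def[of q \<epsilon> "Mop m (Tch q \<epsilon>) (uu j)"] Suc.IH) simp
    ultimately show ?case using Suc.IH by simp
  qed
  have low: "\<forall>k<j. uu j k = 0" for j
  proof (induction j)
    case 0 show ?case by simp
  next
    case (Suc j)
    have vb: "(\<forall>i<j. (Tch q \<epsilon> ^^ 1) (uu j) i = 0) \<and> (Tch q \<epsilon> ^^ 1) (uu j) j = dl q \<epsilon> j ^ 1 * uu j j"
      by (rule vanish_below[OF Suc.IH])
    show ?case
    proof (intro allI impI)
      fix k assume "k < Suc j"
      then consider "k < j" | "k = j" by linarith
      then show "uu (Suc j) k = 0"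
      proof cases
        case 1 then show ?thesis using vb Suc.IH by (simp add: uuS)
      next
        case 2 then show ?thesis using vb by (simp add: uuS)
      qed
    qed
  qed
  have topz: "uu N k = 0" for k
  proof (induction k rule: less_induct)
    case (less k)
    show ?case
    proof (cases "k < N")
      case True then show ?thesis using low by blast
    next
      case False
      have vb: "(Tch q \<epsilon> ^^ e) (uu N) k = dl q \<epsilon> k ^ e * uu N k" for e
        using vanish_below[of k "uu N" e] less.IH by blast
      have sm: "summable (\<lambda>e. m e * dl q \<epsilon> k ^ e)"
      proof (rule summable_comparison_test'[OF ms[of "norm (dl q \<epsilon> k)"]])
        show "norm (m e * dl q \<epsilon> k ^ e) \<le> norm (m e) * norm (dl q \<epsilon> k) ^ e" for e
          by (simp add: norm_mult norm_power)
      qed simp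
      have "0 = Mop m (Tch q \<epsilon>) (uu N) k" using Mz by simp
      also have "\<dots> = (\<Sum>e. m e * dl q \<epsilon> k ^ e * uu N k)"
        unfolding Mop_def vb by (simp add: mult.assoc)
      also have "\<dots> = (\<Sum>e. m e * dl q \<epsilon> k ^ e) * uu N k"
        by (rule suminf_mult2[OF sm, symmetric])
      finally have "(\<Sum>e. m e * dl q \<epsilon> k ^ e) * uu N k = 0" by simp
      then show ?thesis using N[of k] False by simp
    qed
  qed
  have down: "uu (N - i) = (\<lambda>k. 0)" if "i \<le> N" for i
    using that
  proof (induction i)
    case 0 then show ?case using topz by auto
  next
    case (Suc i)
    define j where "j = N - Suc i"
    have "Suc j = N - i" using Suc.prems by (simp add: j_def)
    then have z: "uu (Suc j) = (\<lambda>k. 0)" using Suc by simp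
    obtain K' where K': "chc r \<sigma> K' (uu j)" using cls by blast
    have "Tch q \<epsilon> (uu j) k = dl q \<epsilon> j * uu j k" for k
      using fun_cong[OF z, of k] by (simp add: uuS)
    then have "uu j k = 0" for k by (rule eig[OF r s K'])
    then show ?case by (auto simp: j_def)
  qed
  show ?thesis using down[of N] by (simp add: uu0)
qed

end

definition zv :: "real \<Rightarrow> (nat \<Rightarrow> complex) \<Rightarrow> bool" where
  "zv q a \<longleftrightarrow> (\<forall>k. ev a (xk q 1 k) = 0 \<and> ev a (xk q (-1) k) = 0)"

lemma xk0: "xk q 1 0 = \<i>" "xk q (-1) 0 = -\<i>" by (simp_all add: xk_def)

lemma even_odd_sums:
  fixes a :: "nat \<Rightarrow> complex"
  assumes sm: "\<And>y. summable (\<lambda>n. a n * y^n)" and z1: "ev a \<i> = 0" and z2: "ev a (-\<i>) = 0"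
  shows "(\<lambda>j. (-1)^j * a (2*j)) sums 0" and "(\<lambda>j. (-1)^j * a (2*j+1)) sums 0"
proof -
  have S1: "(\<lambda>l. a l * \<i>^l) sums 0" using summable_sums[OF sm[of \<i>]] z1 by (simp add: ev_def)
  have S2: "(\<lambda>l. a l * (-\<i>)^l) sums 0" using summable_sums[OF sm[of "-\<i>"]] z2 by (simp add: ev_def)
  define fe where "fe l = (a l * \<i>^l + a l * (-\<i>)^l) / 2" for l
  define fo where "fo l = (a l * \<i>^l - a l * (-\<i>)^l) / (2*\<i>)" for l
  have "fe sums ((0 + 0)/2)" unfolding fe_def by (intro sums_divide sums_add S1 S2)
  then have fe0: "fe sums 0" by simp
  have "fo sums ((0 - 0)/(2*\<i>))" unfolding fo_def by (intro sums_divide sums_diff S1 S2)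
  then have fo0: "fo sums 0" by simp
  have ie: "\<i>^(2*j) = (-1)^j" "(-\<i>)^(2*j) = (-1)^j" for j :: nat
    by (simp_all add: power_mult)
  have fe_even: "fe (2*j) = (-1)^j * a (2*j)" for j by (simp add: fe_def ie)
  have fe_odd: "fe n = 0" if "n \<notin> range (\<lambda>j. 2*j)" for n
  proof -
    from that have "odd n" by (metis evenE rangeI)
    then obtain j where "n = 2*j+1" by (metis oddE)
    then show ?thesis by (simp add: fe_def ie)
  qed
  have fo_odd: "fo (2*j+1) = (-1)^j * a (2*j+1)" for j by (simp add: fo_def ie field_simps)
  have fo_even: "fo n = 0" if "n \<notin> range (\<lambda>j. 2*j+1)" for n
  proof -
    from that have "even n" by (metis oddE rangeI)
    then obtain j where "n = 2*j" by (metis evenE)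
    then show ?thesis by (simp add: fo_def ie)
  qed
  have "(\<lambda>j. fe (2*j)) sums 0"
    by (subst sums_mono_reindex) (use fe0 fe_odd in \<open>auto simp: strict_mono_def\<close>)
  then show "(\<lambda>j. (-1)^j * a (2*j)) sums 0" by (simp add: fe_even)
  have "(\<lambda>j. fo (2*j+1)) sums 0"
    by (subst sums_mono_reindex) (use fo0 fo_even in \<open>auto simp: strict_mono_def\<close>)
  then show "(\<lambda>j. (-1)^j * a (2*j+1)) sums 0" by (simp only: fo_odd)
qed

lemma xk_sq':
  assumes "0 < q" "q < 1" "\<epsilon> = 1 \<or> \<epsilon> = -1"
  shows "1 + (xk q \<epsilon> k)^2 = complex_of_real (1 - 1/q^(2*k))"
  using chainloc.xk_sq[OF chainloc.intro[OF assms]] .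

lemma xk_div_q: "q \<noteq> 0 \<Longrightarrow> xk q \<epsilon> k / complex_of_real q = xk q \<epsilon> (Suc k)"
  by (simp add: xk_def)

lemma Z_step:
  assumes q: "0 < q" "q < 1" and \<rho>: "0 < \<rho>" "\<rho> < 1" "\<rho>^4 \<le> q"
    and c: "ccls \<rho> (1/2) C a" and v: "zv q a"
  obtains a' where "ccls \<rho> (1/2) (C/3) a'" "zv q a'" "a' 0 = a 0"
proof -
  have sm: "\<And>y. summable (\<lambda>n. a n * y^n)" by (rule ccls_summable'[OF \<rho>(1,2) _ c]) simp
  have C0: "C \<ge> 0" by (rule ccls_C[OF c])
  have ev0: "ev a \<i> = 0" "ev a (-\<i>) = 0" using v unfolding zv_def by (metis xk0)+
  note EO = even_odd_sums[OF sm ev0]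
  define g where "g n = (\<Sum>j. (-1)^j * a (n + 2*j + 2))" for n
  have tb: "norm ((-1)^j * a (n + 2*j + 2)) \<le> C * (1/2)^n * \<rho>^(n^2) * q^n * (1/4)^(Suc j)" for n j
  proof -
    have "norm ((-1)^j * a (n + 2*j + 2)) = norm (a (n + 2*j + 2))" by (simp add: norm_mult norm_power)
    also have "\<dots> \<le> C * (1/2)^(n + 2*j + 2) * \<rho>^((n + 2*j + 2)^2)" by (rule c[unfolded ccls_def, rule_format])
    also have "\<dots> \<le> C * (1/2)^(n + 2*j + 2) * (\<rho>^(n^2) * q^n)"
    proof -
      have e: "n^2 + 4*n \<le> (n + 2*j + 2)^2" by (simp add: power2_eq_square algebra_simps)
      have "\<rho>^((n + 2*j + 2)^2) \<le> \<rho>^(n^2 + 4*n)" using \<rho> by (intro power_decreasing e) auto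
      also have "\<dots> = \<rho>^(n^2) * (\<rho>^4)^n" by (simp add: power_add power_mult)
      also have "\<dots> \<le> \<rho>^(n^2) * q^n" using \<rho> by (intro mult_left_mono power_mono) auto
      finally show ?thesis using C0 by (intro mult_left_mono) auto
    qed
    also have "\<dots> = C * (1/2)^n * \<rho>^(n^2) * q^n * (1/4)^(Suc j)"
    proof -
      have four: "((2::real)^j)^2 = 4^j" by (simp add: power2_eq_square power_mult_distrib[symmetric])
      show ?thesis by (simp add: power_add power_mult field_simps four)
    qed
    finally show ?thesis .
  qed
  have geo: "(\<lambda>j. (1/4::real)^(Suc j)) sums (1/3)"
    using sums_mult[OF geometric_sums[of "1/4::real"], of "1/4"] by simp
  have gs: "(\<lambda>j. (-1)^j * a (n + 2*j + 2)) sums g n" for n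
  proof -
    have "summable (\<lambda>j. (-1)^j * a (n + 2*j + 2))"
      by (rule summable_comparison_test'[OF summable_mult[OF sums_summable[OF geo], of "C * (1/2)^n * \<rho>^(n^2) * q^n"]])
         (use tb in simp)
    then show ?thesis unfolding g_def by (rule summable_sums)
  qed
  have gb: "norm (g n) \<le> C * (1/2)^n * \<rho>^(n^2) * q^n / 3" for n
  proof -
    have ns: "summable (\<lambda>j. norm ((-1)^j * a (n + 2*j + 2)))"
      by (rule summable_comparison_test'[OF summable_mult[OF sums_summable[OF geo], of "C * (1/2)^n * \<rho>^(n^2) * q^n"]])
         (use tb in simp)
    have "norm (g n) \<le> (\<Sum>j. norm ((-1)^j * a (n + 2*j + 2)))"
      unfolding g_def by (rule summable_norm[OF ns])
    also have "\<dots> \<le> (\<Sum>j. C * (1/2)^n * \<rho>^(n^2) * q^n * (1/4)^(Suc j))"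
      by (rule suminf_le[OF tb ns summable_mult[OF sums_summable[OF geo]]])
    also have "\<dots> = C * (1/2)^n * \<rho>^(n^2) * q^n * (1/3)"
      using sums_unique[OF sums_mult[OF geo]] by simp
    finally show ?thesis by simp
  qed
  have grec: "g n = a (n+2) - g (n+2)" for n
  proof -
    have "(\<lambda>j. (-1)^(Suc j) * a (n + 2*(Suc j) + 2)) sums (g n - (-1)^0 * a (n + 2*0 + 2))"
      using gs[of n] by (subst sums_Suc_iff) simp
    moreover have "(-1)^(Suc j) * a (n + 2*(Suc j) + 2) = - ((-1)^j * a ((n+2) + 2*j + 2))" for j
      by (simp add: algebra_simps)
    ultimately have "(\<lambda>j. - ((-1)^j * a ((n+2) + 2*j + 2))) sums (g n - a (n+2))" by simp
    then have "(\<lambda>j. ((-1)^j * a ((n+2) + 2*j + 2))) sums (- (g n - a (n+2)))"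
      using sums_minus by fastforce
    then have "g (n+2) = - (g n - a (n+2))" using gs[of "n+2"] sums_unique2 by blast
    then show ?thesis by simp
  qed
  have g0: "g 0 = a 0"
  proof -
    have "(\<lambda>j. (-1)^(Suc j) * a (2*(Suc j))) sums (0 - (-1)^0 * a (2*0))"
      using EO(1) by (subst sums_Suc_iff) simp
    then have "(\<lambda>j. - ((-1)^j * a (0 + 2*j + 2))) sums (- a 0)" by (simp add: algebra_simps)
    then have "(\<lambda>j. ((-1)^j * a (0 + 2*j + 2))) sums a 0" using sums_minus by fastforce
    then show ?thesis using gs[of 0] sums_unique2 by blast
  qed
  have g1: "g 1 = a 1"
  proof -
    have "(\<lambda>j. (-1)^(Suc j) * a (2*(Suc j)+1)) sums (0 - (-1)^0 * a (2*0+1))"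
      using EO(2) by (subst sums_Suc_iff) simp
    then have "(\<lambda>j. - ((-1)^j * a (1 + 2*j + 2))) sums (- a 1)" by (simp add: algebra_simps)
    then have "(\<lambda>j. ((-1)^j * a (1 + 2*j + 2))) sums a 1" using sums_minus by fastforce
    then show ?thesis using gs[of 1] sums_unique2 by blast
  qed
  have ag: "a n = g n + (if n \<ge> 2 then g (n-2) else 0)" for n
  proof (cases "n \<ge> 2")
    case True
    then obtain m where "n = m + 2" by (metis add.commute le_add_diff_inverse)
    then show ?thesis using grec[of m] by simp
  next
    case False
    then have "n = 0 \<or> n = 1" by auto
    then show ?thesis using g0 g1 by auto
  qed
  have gsm: "summable (\<lambda>n. g n * y^n)" for y
  proof (rule summable_comparison_test'[OF summable_mult[OF geo_quad_summable[OF \<rho>(1,2), of "q * norm y / 2"], of "C/3"]])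
    fix n
    have "norm (g n * y^n) \<le> C * (1/2)^n * \<rho>^(n^2) * q^n / 3 * norm y ^ n"
      unfolding norm_mult norm_power by (rule mult_right_mono[OF gb]) simp
    also have "\<dots> = C/3 * ((q * norm y / 2)^n * \<rho>^(n^2))" by (simp add: power_mult_distrib power_divide field_simps)
    finally show "norm (g n * y^n) \<le> C/3 * ((q * norm y / 2)^n * \<rho>^(n^2))" .
  qed (use q in simp)
  have evg: "ev a y = (1 + y^2) * ev g y" for y
  proof -
    have S: "(\<lambda>n. g n * y^n) sums ev g y" unfolding ev_def by (rule summable_sums[OF gsm])
    have "(\<lambda>i. y^2 * (g i * y^i)) sums (y^2 * ev g y)" by (rule sums_mult[OF S])
    moreover have "y^2 * (g i * y^i) = (\<lambda>n. if n \<ge> 2 then g (n-2) * y^n else 0) (i+2)" for i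
      by (simp add: power_add mult_ac power2_eq_square)
    ultimately have "(\<lambda>i. (\<lambda>n. if n \<ge> 2 then g (n-2) * y^n else 0) (i+2)) sums (y^2 * ev g y)" by simp
    then have S2: "(\<lambda>n. if n \<ge> 2 then g (n-2) * y^n else 0) sums (y^2 * ev g y)"
      by (subst (asm) sums_zero_iff_shift) auto
    have "(\<lambda>n. g n * y^n + (if n \<ge> 2 then g (n-2) * y^n else 0)) sums (ev g y + y^2 * ev g y)"
      by (rule sums_add[OF S S2])
    moreover have "g n * y^n + (if n \<ge> 2 then g (n-2) * y^n else 0) = a n * y^n" for n
      using ag[of n] by (simp add: algebra_simps)
    ultimately have "(\<lambda>n. a n * y^n) sums (ev g y + y^2 * ev g y)" by simp
    then show ?thesis unfolding ev_def by (simp add: sums_iff algebra_simps)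
  qed
  define a' where "a' n = g n / complex_of_real (q^n)" for n
  show ?thesis
  proof (rule that[of a'])
    show "ccls \<rho> (1/2) (C/3) a'"
      unfolding ccls_def
    proof
      fix n
      have "norm (a' n) = norm (g n) / q^n" using q by (simp add: a'_def norm_divide norm_power)
      also have "\<dots> \<le> (C * (1/2)^n * \<rho>^(n^2) * q^n / 3) / q^n" using gb[of n] q by (intro divide_right_mono) auto
      also have "\<dots> = C/3 * (1/2)^n * \<rho>^(n^2)" using q by simp
      finally show "norm (a' n) \<le> C/3 * (1/2)^n * \<rho>^(n^2)" .
    qed
    show "a' 0 = a 0" by (simp add: a'_def g0)
    show "zv q a'"
      unfolding zv_def
    proof (intro allI conjI)
      fix k
      have gen: "ev a' (xk q \<epsilon> k) = 0" if e: "\<epsilon> = 1 \<or> \<epsilon> = -1" and za: "ev a (xk q \<epsilon> (Suc k)) = 0" for \<epsilon>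
      proof -
        have "a' n * (xk q \<epsilon> k)^n = g n * (xk q \<epsilon> (Suc k))^n" for n
          using q by (simp add: a'_def xk_div_q[symmetric] power_divide)
        then have "ev a' (xk q \<epsilon> k) = ev g (xk q \<epsilon> (Suc k))" by (simp add: ev_def)
        moreover have "(1 + (xk q \<epsilon> (Suc k))^2) * ev g (xk q \<epsilon> (Suc k)) = 0" using evg za by simp
        moreover have "1 + (xk q \<epsilon> (Suc k))^2 \<noteq> 0"
        proof -
          have "q^(2*Suc k) \<le> q^1" by (rule power_decreasing) (use q in auto)
          then have "q^(2*Suc k) < 1" using q(2) by (simp only: power_one_right)
          then have "1 - 1/q^(2*Suc k) \<noteq> 0" using q by auto
          then show ?thesis using xk_sq'[OF q e] of_real_eq_0_iff by metis
        qed
        ultimately show ?thesis by simp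
      qed
      show "ev a' (xk q 1 k) = 0" using v gen[of 1] by (simp add: zv_def)
      show "ev a' (xk q (-1) k) = 0" using v gen[of "-1"] by (simp add: zv_def)
    qed
  qed
qed

lemma Z0:
  assumes q: "0 < q" "q < 1" and \<rho>: "0 < \<rho>" "\<rho> < 1" "\<rho>^4 \<le> q"
    and c: "ccls \<rho> (1/2) C a" and v: "zv q a"
  shows "a 0 = 0"
proof -
  have ex: "\<exists>a'. ccls \<rho> (1/2) (C/3^m) a' \<and> zv q a' \<and> a' 0 = a 0" for m
  proof (induction m)
    case 0 then show ?case using c v by auto
  next
    case (Suc m)
    then obtain a' where a': "ccls \<rho> (1/2) (C/3^m) a'" "zv q a'" "a' 0 = a 0" by blast
    obtain a'' where "ccls \<rho> (1/2) (C/3^m/3) a''" "zv q a''" "a'' 0 = a' 0"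
      by (rule Z_step[OF q \<rho> a'(1,2)])
    then show ?case using a'(3) by (auto simp: mult.commute)
  qed
  have bnd: "norm (a 0) \<le> C/3^m" for m
  proof -
    obtain a' where "ccls \<rho> (1/2) (C/3^m) a'" "a' 0 = a 0" using ex[of m] by blast
    then show ?thesis unfolding ccls_def by (metis mult_1_right power_0 zero_power2)
  qed
  show ?thesis
  proof (rule ccontr)
    assume "a 0 \<noteq> 0"
    then have pos: "norm (a 0) > 0" by simp
    obtain m where "C / norm (a 0) < 3^m" using real_arch_pow[of 3 "C / norm (a 0)"] by auto
    then have "C / 3^m < norm (a 0)" using pos by (simp add: field_simps)
    then show False using bnd[of m] by simp
  qed
qed

lemma Z_main:
  assumes q: "0 < q" "q < 1" and \<rho>: "0 < \<rho>" "\<rho> < 1" "\<rho>^4 \<le> q"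
  shows "ccls \<rho> (1/2) C a \<Longrightarrow> zv q a \<Longrightarrow> a n = 0"
proof (induction n arbitrary: a C)
  case 0 then show ?case using Z0[OF q \<rho>] by blast
next
  case (Suc n)
  have a0: "a 0 = 0" using Z0[OF q \<rho> Suc.prems] .
  define b where "b l = a (Suc l)" for l
  have cb: "ccls \<rho> (1/2) C b"
    unfolding ccls_def
  proof
    fix l
    have C0: "C \<ge> 0" by (rule ccls_C[OF Suc.prems(1)])
    have "norm (b l) \<le> C * (1/2)^(Suc l) * \<rho>^((Suc l)^2)"
      unfolding b_def by (rule Suc.prems(1)[unfolded ccls_def, rule_format])
    also have "\<dots> \<le> C * (1/2)^l * \<rho>^(l^2)"
    proof -
      have "\<rho>^((Suc l)^2) \<le> \<rho>^(l^2)" using \<rho> by (intro power_decreasing) (auto simp: power2_eq_square)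
      moreover have "(1/2::real)^(Suc l) \<le> (1/2)^l" by (intro power_decreasing) auto
      ultimately show ?thesis using C0 \<rho> by (intro mult_mono mult_left_mono) auto
    qed
    finally show "norm (b l) \<le> C * (1/2)^l * \<rho>^(l^2)" .
  qed
  have sm: "\<And>y. summable (\<lambda>n. a n * y^n)" by (rule ccls_summable'[OF \<rho>(1,2) _ Suc.prems(1)]) simp
  have evb: "ev b x = ev a x / x" if "x \<noteq> 0" for x
  proof -
    have "(\<lambda>l. a (Suc l) * x^(Suc l)) sums (ev a x - a 0 * x^0)"
      using summable_sums[OF sm[of x]] unfolding ev_def by (subst sums_Suc_iff) simp
    then have "(\<lambda>l. x * (b l * x^l)) sums ev a x" using a0 by (simp add: b_def mult_ac)
    then have "(\<lambda>l. b l * x^l) sums (ev a x / x)" by (rule sums_mult_D) (rule that)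
    then show ?thesis unfolding ev_def by (rule sums_unique[symmetric])
  qed
  have xnz: "xk q e k \<noteq> 0" if "e = 1 \<or> e = -1" for e k using that q by (auto simp: xk_def)
  have vb: "zv q b" using Suc.prems(2) by (simp add: zv_def evb xnz)
  show ?case using Suc.IH[OF cb vb] by (simp add: b_def)
qed

lemma chain_bound:
  assumes r: "0 < r" "r < 1" "q = r^2" and s: "0 < \<sigma>" "\<sigma> < \<sigma>'"
    and e: "\<epsilon> = 1 \<or> \<epsilon> = -1" and c: "ccls r \<sigma> C a"
  obtains K where "chc r \<sigma>' K (\<lambda>k. ev a (xk q \<epsilon> k))"
proof -
  define t where "t = max \<sigma>' (1/\<sigma>')"
  have t0: "0 \<le> t" using s by (simp add: t_def)
  obtain B where B: "B > 0" "\<And>n. t^n * r^(n^2) \<le> B" using quad_bounded[OF r(1,2) t0] by blast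
  have C0: "C \<ge> 0" by (rule ccls_C[OF c])
  have q0: "0 < q" using r by simp
  have key: "\<sigma>^l * r^(l^2) / q^(k*l) \<le> (\<sigma>/\<sigma>')^l * (B * \<sigma>'^k / r^(k^2))" for l k
  proof -
    obtain d sd where ds: "l^2 + k^2 = d^2 + 2*k*l" "\<sigma>^l = (\<sigma>/\<sigma>')^l * \<sigma>'^k * sd" "0 \<le> sd" "sd \<le> t^d"
    proof (cases "k \<le> l")
      case True
      then obtain d where l: "l = k + d" by (metis le_add_diff_inverse)
      show ?thesis
      proof (rule that[of d "\<sigma>'^d"])
        show "l^2 + k^2 = d^2 + 2*k*l" by (simp add: l power2_eq_square algebra_simps)
        show "\<sigma>^l = (\<sigma>/\<sigma>')^l * \<sigma>'^k * \<sigma>'^d" using s by (simp add: l power_add power_divide field_simps)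
        show "0 \<le> \<sigma>'^d" using s by simp
        show "\<sigma>'^d \<le> t^d" using s by (intro power_mono) (auto simp: t_def)
      qed
    next
      case False
      then obtain d where k: "k = l + d" by (metis le_add_diff_inverse nat_le_linear)
      show ?thesis
      proof (rule that[of d "(1/\<sigma>')^d"])
        show "l^2 + k^2 = d^2 + 2*k*l" by (simp add: k power2_eq_square algebra_simps)
        show "\<sigma>^l = (\<sigma>/\<sigma>')^l * \<sigma>'^k * (1/\<sigma>')^d" using s by (simp add: k power_add power_divide field_simps)
        show "0 \<le> (1/\<sigma>')^d" using s by simp
        show "(1/\<sigma>')^d \<le> t^d" using s by (intro power_mono) (auto simp: t_def)
      qed
    qed
    have e1: "l^2 + k^2 = d^2 + 2*(k*l)" using ds(1) by simp
    have "r^(l^2) * r^(k^2) = r^(d^2) * (r^2)^(k*l)"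
      by (simp only: power_add[symmetric] power_mult[symmetric] e1)
    then have rr: "r^(l^2) * r^(k^2) = r^(d^2) * q^(k*l)" using r(3) by simp
    have "\<sigma>^l * r^(l^2) / q^(k*l) = (\<sigma>/\<sigma>')^l * \<sigma>'^k * (sd * r^(d^2)) / r^(k^2)"
    proof -
      have h: "r^(l^2) / q^(k*l) = r^(d^2) / r^(k^2)"
        using rr r q0 by (simp add: field_simps)
      have "\<sigma>^l * r^(l^2) / q^(k*l) = \<sigma>^l * (r^(l^2) / q^(k*l))" by simp
      also have "\<dots> = ((\<sigma>/\<sigma>')^l * \<sigma>'^k * sd) * (r^(d^2) / r^(k^2))" by (simp only: ds(2) h)
      also have "\<dots> = (\<sigma>/\<sigma>')^l * \<sigma>'^k * (sd * r^(d^2)) / r^(k^2)" by (simp add: mult_ac)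
      finally show ?thesis .
    qed
    also have "\<dots> \<le> (\<sigma>/\<sigma>')^l * \<sigma>'^k * B / r^(k^2)"
    proof -
      have "sd * r^(d^2) \<le> t^d * r^(d^2)" using ds(3,4) r by (intro mult_right_mono) auto
      also have "\<dots> \<le> B" by (rule B(2))
      finally show ?thesis using s r by (intro divide_right_mono mult_left_mono) auto
    qed
    finally show ?thesis by (simp add: field_simps)
  qed
  define K where "K = C * B / (1 - \<sigma>/\<sigma>')"
  have rat: "0 \<le> \<sigma>/\<sigma>'" "\<sigma>/\<sigma>' < 1" using s by auto
  show ?thesis
  proof (rule that[of K])
    show "chc r \<sigma>' K (\<lambda>k. ev a (xk q \<epsilon> k))"
      unfolding chc_def
    proof
      fix k
      let ?x = "xk q \<epsilon> k"
      have nx: "norm ?x = 1/q^k" using e q0 by (auto simp: xk_def norm_mult norm_divide norm_power)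
      have tb: "norm (a l * ?x^l) \<le> C * (B * \<sigma>'^k / r^(k^2)) * (\<sigma>/\<sigma>')^l" for l
      proof -
        have "norm (a l * ?x^l) = norm (a l) / q^(k*l)" by (simp add: norm_mult norm_power nx power_mult power_divide)
        also have "\<dots> \<le> C * \<sigma>^l * r^(l^2) / q^(k*l)"
          using c q0 by (intro divide_right_mono) (auto simp: ccls_def)
        also have "\<dots> = C * (\<sigma>^l * r^(l^2) / q^(k*l))" by simp
        also have "\<dots> \<le> C * ((\<sigma>/\<sigma>')^l * (B * \<sigma>'^k / r^(k^2)))" by (intro mult_left_mono key C0)
        finally show ?thesis by (simp add: mult_ac)
      qed
      have gs: "summable (\<lambda>l. C * (B * \<sigma>'^k / r^(k^2)) * (\<sigma>/\<sigma>')^l)"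
        by (intro summable_mult summable_geometric) (use rat in simp)
      have ns: "summable (\<lambda>l. norm (a l * ?x^l))"
        by (rule summable_comparison_test'[OF gs]) (use tb in simp)
      have "norm (ev a ?x) \<le> (\<Sum>l. norm (a l * ?x^l))" unfolding ev_def by (rule summable_norm[OF ns])
      also have "\<dots> \<le> (\<Sum>l. C * (B * \<sigma>'^k / r^(k^2)) * (\<sigma>/\<sigma>')^l)" by (rule suminf_le[OF tb ns gs])
      also have "\<dots> = C * (B * \<sigma>'^k / r^(k^2)) * (\<Sum>l. (\<sigma>/\<sigma>')^l)"
        by (rule suminf_mult[OF summable_geometric]) (use rat in simp)
      also have "\<dots> = C * (B * \<sigma>'^k / r^(k^2)) * (1 / (1 - \<sigma>/\<sigma>'))"
        using suminf_geometric[of "\<sigma>/\<sigma>'"] rat by simp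
      also have "\<dots> = K * \<sigma>'^k / r^(k^2)" by (simp add: K_def mult_ac)
      finally show "norm (ev a ?x) \<le> K * \<sigma>'^k / r^(k^2)" .
    qed
  qed
qed

lemma qD_zero_strip:
  assumes q: "0 < q" "q < 1" and h: "\<forall>x\<in>strip. h x = 0" and x: "x \<in> strip"
  shows "qD q h x = 0"
proof (cases "x = 0")
  case False
  then show ?thesis using h x strip_mult_q[OF q x] by (simp add: qD_def)
next
  case True
  have all: "\<forall>y. y \<noteq> 0 \<and> dist y 0 < 1 \<longrightarrow> (h y - h (complex_of_real q * y)) / (complex_of_real (1 - q) * y) = 0"
  proof (intro allI impI)
    fix y :: complex assume "y \<noteq> 0 \<and> dist y 0 < 1"
    then have "norm y < 1" by simp
    then have ys: "y \<in> strip" using abs_Im_le_cmod[of y] by (simp add: strip_def)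
    show "(h y - h (complex_of_real q * y)) / (complex_of_real (1 - q) * y) = 0"
      using h ys strip_mult_q[OF q ys] by simp
  qed
  have ev: "\<forall>\<^sub>F y in at 0. (h y - h (complex_of_real q * y)) / (complex_of_real (1 - q) * y) = 0"
    unfolding eventually_at using all by (intro exI[of _ 1]) simp
  have "Lim (at 0) (\<lambda>y. (h y - h (complex_of_real q * y)) / (complex_of_real (1 - q) * y)) = 0"
    by (rule tendsto_Lim[OF trivial_limit_at tendsto_eventually[OF ev]])
  then show ?thesis using True by (simp add: qD_def)
qed

lemma qD_funpow_zero:
  assumes q: "0 < q" "q < 1" and h: "\<forall>x\<in>strip. h x = 0"
  shows "\<forall>x\<in>strip. (qD q ^^ e) h x = 0"
proof (induction e)
  case 0 then show ?case using h by simp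
next
  case (Suc e)
  then show ?case using qD_zero_strip[OF q Suc] by simp
qed

lemma qD_form:
  assumes q: "0 < q" "q < 1" and sm: "\<And>e y. summable (\<lambda>n. (Tco q ^^ e) a n * y^n)"
    and Fev: "\<forall>x\<in>strip. F x = ev a x * Gf q x"
  shows "x \<in> strip \<Longrightarrow> x \<noteq> 0 \<Longrightarrow> (qD q ^^ e) F x = Gf q x * ev ((Tco q ^^ e) a) x"
proof (induction e arbitrary: x)
  case 0 then show ?case using Fev by (simp add: mult.commute)
next
  case (Suc e)
  let ?b = "(Tco q ^^ e) a"
  let ?qx = "complex_of_real q * x"
  have qx: "?qx \<in> strip" "?qx \<noteq> 0" using strip_mult_q[OF q Suc.prems(1)] Suc.prems q by auto
  have "(qD q ^^ Suc e) F x = ((qD q ^^ e) F x - (qD q ^^ e) F ?qx) / (complex_of_real (1 - q) * x)"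
    using Suc.prems by (simp add: qD_def)
  also have "\<dots> = (Gf q x * ev ?b x - Gf q ?qx * ev ?b ?qx) / (complex_of_real (1 - q) * x)"
    using Suc.IH[OF Suc.prems] Suc.IH[OF qx] by simp
  also have "\<dots> = Gf q x * ((ev ?b x - (1 + x^2) * ev ?b ?qx) / (complex_of_real (1 - q) * x))"
    using Gf_shift[OF q Suc.prems(1)] by (simp add: algebra_simps diff_divide_distrib)
  also have "(ev ?b x - (1 + x^2) * ev ?b ?qx) / (complex_of_real (1 - q) * x) = ev (Tco q ?b) x"
  proof -
    have "complex_of_real (1-q) * x * ev (Tco q ?b) x = ev ?b x - (1 + x^2) * ev ?b ?qx"
      by (rule ev_Tco[OF q Suc.prems(2) sm])
    moreover have "complex_of_real (1-q) * x \<noteq> 0" using q Suc.prems by simp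
    ultimately show ?thesis by (simp add: field_simps)
  qed
  finally show ?case by simp
qed

lemma hard_dir:
  fixes q s C :: real and a m :: "nat \<Rightarrow> complex" and F :: "complex \<Rightarrow> complex"
  assumes q: "0 < q" "q < 1" and s: "0 < s" "s * sqrt q < 1"
    and c: "ccls (sqrt q) s C a"
    and Fev: "\<forall>x\<in>strip. F x = ev a x * Gf q x"
    and ms: "\<And>c. c \<ge> 0 \<Longrightarrow> summable (\<lambda>e. norm (m e) * c^e)"
    and conv: "\<And>x. x \<in> strip \<Longrightarrow> x \<noteq> 0 \<Longrightarrow> summable (\<lambda>e. norm (m e * (qD q ^^ e) F x))
                 \<Longrightarrow> (\<Sum>e. m e * (qD q ^^ e) F x) = 0"
    and nz: "m e0 \<noteq> 0"
  shows "a n = 0"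
proof -
  define r where "r = sqrt q"
  have r: "0 < r" "r < 1" "r^2 = q" using q by (auto simp: r_def)
  have c': "ccls r s C a" using c by (simp add: r_def)
  have sr: "r * s < 1" using s by (simp add: r_def mult.commute)
  define \<kappa> where "\<kappa> = (s*r + 1/(s*r))/(1-q)"
  have \<kappa>0: "\<kappa> \<ge> 0" using r s q by (simp add: \<kappa>_def)
  define bT where "bT e = (Tco q ^^ e) a" for e
  have cb: "ccls r s (C * \<kappa>^e) (bT e)" for e
  proof (induction e)
    case 0 then show ?case using c' by (simp add: bT_def)
  next
    case (Suc e)
    have "ccls r s (C * \<kappa>^e * \<kappa>) (Tco q (bT e))"
      using Tco_ccls[OF r(1,2) r(3)[symmetric] s(1) Suc] by (simp add: \<kappa>_def)
    then show ?case by (simp add: bT_def mult_ac)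
  qed
  have C0: "C \<ge> 0" using ccls_C[OF c] .
  have smb: "summable (\<lambda>n. bT e n * y^n)" for e y by (rule ccls_summable'[OF r(1,2) _ cb]) (use s in simp)
  have qDf: "(qD q ^^ e) F x = Gf q x * ev (bT e) x" if "x \<in> strip" "x \<noteq> 0" for x e
    unfolding bT_def by (rule qD_form[OF q _ Fev that]) (use smb[unfolded bT_def] in auto)
  have Bs: "summable (\<lambda>n. C * ((s * norm x)^n * r^(n^2)))" for x
    by (intro summable_mult geo_quad_summable r(1,2)) (use s in simp)
  have tbn: "norm (bT e n * x^n) \<le> \<kappa>^e * (C * ((s * norm x)^n * r^(n^2)))" for e n x
  proof -
    have "norm (bT e n * x^n) = norm (bT e n) * norm x ^ n" by (simp add: norm_mult norm_power)
    also have "\<dots> \<le> C * \<kappa>^e * s^n * r^(n^2) * norm x ^ n"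
      using cb[of e] unfolding ccls_def by (intro mult_right_mono) auto
    also have "\<dots> = \<kappa>^e * (C * ((s * norm x)^n * r^(n^2)))" by (simp add: power_mult_distrib mult_ac)
    finally show ?thesis .
  qed
  have ems: "summable (\<lambda>e. m e * (bT e n * x^n))" for n x
  proof (rule summable_comparison_test'[OF summable_mult2[OF ms[OF \<kappa>0], of "C * ((s * norm x)^n * r^(n^2))"]])
    fix e
    show "norm (m e * (bT e n * x^n)) \<le> norm (m e) * \<kappa>^e * (C * ((s * norm x)^n * r^(n^2)))"
      using tbn[of e n x] by (simp add: norm_mult mult_left_mono mult.assoc)
  qed
  have evb: "norm (ev (bT e) x) \<le> \<kappa>^e * (\<Sum>n. C * ((s * norm x)^n * r^(n^2)))" for e x
  proof -
    have ns: "summable (\<lambda>n. norm (bT e n * x^n))"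
      by (rule summable_comparison_test'[OF summable_mult[OF Bs, of "\<kappa>^e"]]) (use tbn in simp)
    have "norm (ev (bT e) x) \<le> (\<Sum>n. norm (bT e n * x^n))" unfolding ev_def by (rule summable_norm[OF ns])
    also have "\<dots> \<le> (\<Sum>n. \<kappa>^e * (C * ((s * norm x)^n * r^(n^2))))"
      by (rule suminf_le[OF tbn ns summable_mult[OF Bs]])
    also have "\<dots> = \<kappa>^e * (\<Sum>n. C * ((s * norm x)^n * r^(n^2)))" by (rule suminf_mult[OF Bs])
    finally show ?thesis .
  qed
  define Hs where "Hs x = (\<Sum>e. m e * ev (bT e) x)" for x
  have mevs: "summable (\<lambda>e. norm (m e * ev (bT e) x))" for x
  proof (rule summable_comparison_test'[OF summable_mult2[OF ms[OF \<kappa>0], of "(\<Sum>n. C * ((s * norm x)^n * r^(n^2)))"]])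
    fix e
    show "norm (norm (m e * ev (bT e) x)) \<le> norm (m e) * \<kappa>^e * (\<Sum>n. C * ((s * norm x)^n * r^(n^2)))"
      using evb[of e x] by (simp add: norm_mult mult_left_mono mult.assoc)
  qed
  have Hz: "Hs x = 0" if x: "x \<in> strip" "x \<noteq> 0" for x
  proof -
    have eqt: "m e * (qD q ^^ e) F x = Gf q x * (m e * ev (bT e) x)" for e using qDf[OF x] by simp
    have sumn: "summable (\<lambda>e. norm (m e * (qD q ^^ e) F x))"
      unfolding eqt norm_mult[of "Gf q x"] by (rule summable_mult[OF mevs])
    have "(\<Sum>e. m e * (qD q ^^ e) F x) = 0" by (rule conv[OF x sumn])
    moreover have "(\<Sum>e. m e * (qD q ^^ e) F x) = Gf q x * Hs x"
      unfolding eqt Hs_def by (rule suminf_mult[OF summable_norm_cancel[OF mevs]])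
    ultimately show ?thesis using Gf_nonzero[OF q x(1)] by simp
  qed
  define h where "h n = (\<Sum>e. m e * bT e n)" for n
  have Hsw: "Hs x = (\<Sum>n. h n * x^n)" for x
  proof -
    have "(\<Sum>e. \<Sum>n. m e * (bT e n * x^n)) = (\<Sum>n. \<Sum>e. m e * (bT e n * x^n))"
    proof (rule dsum_swap[where A="\<lambda>e. norm (m e) * \<kappa>^e" and B="\<lambda>n. C * ((s * norm x)^n * r^(n^2))"])
      show "norm (m e * (bT e n * x^n)) \<le> norm (m e) * \<kappa>^e * (C * ((s * norm x)^n * r^(n^2)))" for e n
        using tbn[of e n x] by (simp add: norm_mult mult_left_mono mult.assoc)
    qed (use ms[OF \<kappa>0] Bs \<kappa>0 C0 s r in auto)
    moreover have "(\<Sum>n. m e * (bT e n * x^n)) = m e * ev (bT e) x" for e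
      unfolding ev_def by (rule suminf_mult[OF smb])
    moreover have "(\<Sum>e. m e * (bT e n * x^n)) = h n * x^n" for n
    proof -
      have "(\<Sum>e. m e * (bT e n * x^n)) = (\<Sum>e. m e * bT e n * x^n)" by (simp add: mult.assoc)
      also have "\<dots> = (\<Sum>e. m e * bT e n) * x^n"
        by (rule suminf_mult2[symmetric]) (use ems[of n 1] in simp)
      finally show ?thesis by (simp add: h_def)
    qed
    ultimately show ?thesis by (simp add: Hs_def)
  qed
  have hsum: "summable (\<lambda>n. h n * x^n)" for x
  proof -
    have "summable (\<lambda>n. h n * x^n) \<longleftrightarrow> summable (\<lambda>n. \<Sum>e. m e * (bT e n * x^n))"
    proof -
      have "(\<Sum>e. m e * (bT e n * x^n)) = h n * x^n" for n
      proof -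
        have "(\<Sum>e. m e * (bT e n * x^n)) = (\<Sum>e. m e * bT e n * x^n)" by (simp add: mult.assoc)
        also have "\<dots> = (\<Sum>e. m e * bT e n) * x^n"
          by (rule suminf_mult2[symmetric]) (use ems[of n 1] in simp)
        finally show ?thesis by (simp add: h_def)
      qed
      then show ?thesis by simp
    qed
    moreover have "summable (\<lambda>n. \<Sum>e. m e * (bT e n * x^n))"
    proof (rule summable_comparison_test'[OF summable_mult[OF Bs, of "\<Sum>e. norm (m e) * \<kappa>^e"]])
      fix n
      have ns: "summable (\<lambda>e. norm (m e * (bT e n * x^n)))"
        by (rule summable_comparison_test'[OF summable_mult2[OF ms[OF \<kappa>0], of "C * ((s * norm x)^n * r^(n^2))"]])
           (use tbn[of _ n x] in \<open>simp add: norm_mult mult_left_mono mult.assoc\<close>)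
      have "norm (\<Sum>e. m e * (bT e n * x^n)) \<le> (\<Sum>e. norm (m e * (bT e n * x^n)))" by (rule summable_norm[OF ns])
      also have "\<dots> \<le> (\<Sum>e. norm (m e) * \<kappa>^e * (C * ((s * norm x)^n * r^(n^2))))"
        by (rule suminf_le[OF _ ns summable_mult2[OF ms[OF \<kappa>0]]])
           (use tbn[of _ n x] in \<open>simp add: norm_mult mult_left_mono mult.assoc\<close>)
      also have "\<dots> = (\<Sum>e. norm (m e) * \<kappa>^e) * (C * ((s * norm x)^n * r^(n^2)))"
        by (rule suminf_mult2[OF ms[OF \<kappa>0], symmetric])
      finally show "norm (\<Sum>e. m e * (bT e n * x^n)) \<le> (\<Sum>e. norm (m e) * \<kappa>^e) * (C * ((s * norm x)^n * r^(n^2)))" .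
    qed
    ultimately show ?thesis by simp
  qed
  have hz: "h n = 0" for n
  proof (rule ccontr)
    assume hn: "h n \<noteq> 0"
    obtain s0 where s0: "s0 > 0" "\<And>z. z \<noteq> 0 \<Longrightarrow> norm z \<le> s0 \<Longrightarrow> (\<Sum>n. h n * z^n) \<noteq> 0"
      using powser_nz_near0[OF hsum hn] by blast
    define z where "z = complex_of_real (min s0 (1/2))"
    have z: "z \<in> strip" "z \<noteq> 0" "norm z \<le> s0" using s0 by (auto simp: strip_def z_def)
    have "(\<Sum>n. h n * z^n) = 0" using Hz[OF z(1,2)] Hsw[of z] by simp
    then show False using s0(2)[OF z(2,3)] by simp
  qed
  have Hall: "Hs x = 0" for x using Hsw[of x] hz by simp
  have mser: "summable (\<lambda>e. m e * z^e)" for z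
    by (rule summable_norm_cancel, rule summable_comparison_test'[OF ms[of "norm z"]]) (auto simp: norm_mult norm_power)
  have zvv: "zv q a"
  proof -
    have chz: "ev a (xk q \<epsilon> k) = 0" if e: "\<epsilon> = 1 \<or> \<epsilon> = -1" for \<epsilon> k
    proof -
      interpret chainloc q \<epsilon> using q e by unfold_locales auto
      define w where "w k = ev a (xk q \<epsilon> k)" for k
      have tw: "(Tch q \<epsilon> ^^ e) w = (\<lambda>k. ev (bT e) (xk q \<epsilon> k))" for e
      proof (induction e)
        case 0 then show ?case by (simp add: w_def bT_def)
      next
        case (Suc e)
        have "(Tch q \<epsilon> ^^ Suc e) w = Tch q \<epsilon> (\<lambda>k. ev (bT e) (xk q \<epsilon> k))" using Suc by simp
        also have "\<dots> = (\<lambda>k. ev (Tco q (bT e)) (xk q \<epsilon> k))"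
          by (rule ext, rule ev_chain[OF smb, symmetric])
        finally show ?case by (simp add: bT_def)
      qed
      have M0: "Mop m (Tch q \<epsilon>) w k = 0" for k
        unfolding Mop_def tw using Hall[of "xk q \<epsilon> k"] by (simp add: Hs_def)
      define \<sigma>' where "\<sigma>' = (s + 1/r)/2"
      have sr': "s < 1/r" using sr r by (simp add: field_simps mult.commute)
      have \<sigma>': "s < \<sigma>'" "r * \<sigma>' < 1" "0 < \<sigma>'"
      proof -
        show "s < \<sigma>'" using sr' by (simp add: \<sigma>'_def)
        show "0 < \<sigma>'" using s r by (simp add: \<sigma>'_def add_pos_pos)
        have "\<sigma>' < 1/r" using sr' by (simp add: \<sigma>'_def)
        then show "r * \<sigma>' < 1" using r by (simp add: field_simps mult.commute)
      qed
      obtain K where K: "chc r \<sigma>' K w"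
        using chain_bound[OF r(1,2) r(3)[symmetric] s(1) \<sigma>'(1) e c'] unfolding w_def by blast
      obtain s1 where s1: "s1 > 0" "\<And>z. z \<noteq> 0 \<Longrightarrow> norm z \<le> s1 \<Longrightarrow> (\<Sum>e. m e * z^e) \<noteq> 0"
        using powser_nz_near0[OF mser nz] by blast
      obtain N where N: "q^N < s1 * (1-q)" using real_arch_pow_inv[of "s1*(1-q)" q] q s1 by auto
      have Nk: "(\<Sum>e. m e * dl q \<epsilon> k ^ e) \<noteq> 0" if "k \<ge> N" for k
      proof -
        have nd: "norm (dl q \<epsilon> k) = q^k/(1-q)"
          unfolding dl_def norm_divide norm_mult norm_of_real norm_xk using q by simp
        have "q^k \<le> q^N" using that q by (intro power_decreasing) auto
        then have "q^k/(1-q) \<le> q^N/(1-q)" using q by (intro divide_right_mono) auto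
        moreover have "q^N/(1-q) < s1" using N q by (simp add: field_simps)
        ultimately have "q^k/(1-q) \<le> s1" by linarith
        moreover have "dl q \<epsilon> k \<noteq> 0" using xk_nz q by (simp add: dl_def)
        ultimately show ?thesis using s1(2) nd by simp
      qed
      have "w k = 0" by (rule chain_zero[OF r(1) r(3) \<sigma>'(3) \<sigma>'(2) K ms M0 Nk])
      then show ?thesis by (simp add: w_def)
    qed
    then show ?thesis by (simp add: zv_def)
  qed
  define \<rho> where "\<rho> = sqrt r"
  have \<rho>: "0 < \<rho>" "\<rho> < 1" "\<rho>^4 \<le> q"
  proof -
    show "0 < \<rho>" "\<rho> < 1" using r by (auto simp: \<rho>_def)
    have "\<rho>^4 = (\<rho>^2)^2" by simp
    also have "\<rho>^2 = r" using r by (simp add: \<rho>_def)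
    finally show "\<rho>^4 \<le> q" using r by simp
  qed
  have r\<rho>: "r = \<rho>^2" using r by (simp add: \<rho>_def)
  define t where "t = 2 * s"
  obtain B where B: "B > 0" "\<And>n. t^n * \<rho>^(n^2) \<le> B" using quad_bounded[OF \<rho>(1,2), of t] s by (auto simp: t_def)
  have c2: "ccls \<rho> (1/2) (C * B) a"
    unfolding ccls_def
  proof
    fix n
    have "norm (a n) \<le> C * s^n * r^(n^2)" using c' by (simp add: ccls_def)
    also have "\<dots> = C * (t^n * \<rho>^(n^2)) * ((1/2)^n * \<rho>^(n^2))"
    proof -
      have e1: "r^(n^2) = \<rho>^(n^2) * \<rho>^(n^2)" by (simp add: r\<rho> power_mult[symmetric] power_add[symmetric] mult_2)
      have e2: "s^n = t^n * (1/2)^n" unfolding t_def by (simp add: power_mult_distrib power_one_over)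
      have "C * s^n * r^(n^2) = C * (t^n * (1/2)^n) * (\<rho>^(n^2) * \<rho>^(n^2))" by (simp only: e1 e2)
      then show ?thesis by (simp add: algebra_simps)
    qed
    also have "\<dots> \<le> C * B * ((1/2)^n * \<rho>^(n^2))"
      using B(2)[of n] C0 \<rho> by (intro mult_right_mono mult_left_mono) auto
    finally show "norm (a n) \<le> C * B * (1/2)^n * \<rho>^(n^2)" by (simp add: mult_ac)
  qed
  show "a n = 0" by (rule Z_main[OF q \<rho> c2 zvv])
qed

theorem proposition5p7:
  fixes q \<gamma> s :: real and g :: "real \<Rightarrow> complex" and F :: "complex \<Rightarrow> complex"
  assumes "0 < q" and "q < 1" and "\<gamma> > 0"
    and "0 < s" and "s < q powr (-1/2)"
    and "g \<in> I_E q \<gamma>" and "F \<in> M_s q s"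
  shows "((\<forall>x\<in>strip. qconv_defined q \<gamma> g F x \<longrightarrow> qconv q \<gamma> g F x = 0)
           \<longleftrightarrow> ((\<forall>t. qmoment_series q \<gamma> g t = 0) \<or> (\<forall>x\<in>strip. F x = 0)))
         \<and> ((\<forall>x\<in>strip. qconv_defined q \<gamma> g F x \<longrightarrow> qconv q \<gamma> g F x = 0)
           \<and> (\<exists>x\<in>strip. F x \<noteq> 0)
         \<longrightarrow> (\<forall>(h::complex \<Rightarrow> complex) x. qconv_defined q \<gamma> g h x \<longrightarrow> qconv q \<gamma> g h x = 0))"
proof -
  have q0: "0 < q" and q1: "q < 1" using assms by auto
  define m where "m e = (-1)^e * qmoment q \<gamma> g e / complex_of_real (qfact q e)" for e
  have tm: "qconv_term q \<gamma> g h x e = m e * (qD q ^^ e) h x" for h x e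
    by (simp add: qconv_term_def m_def)
  have gsum: "summable (\<lambda>k. qmoment q \<gamma> g k * t^k / complex_of_real (qfact q k))" for t
    using assms(6) by (simp add: I_E_def)
  have ms: "summable (\<lambda>e. norm (m e) * c^e)" if c: "c \<ge> 0" for c
  proof -
    have s1: "summable (\<lambda>n. qmoment q \<gamma> g n / complex_of_real (qfact q n) * (complex_of_real (c+1))^n)"
    proof -
      have "summable (\<lambda>k. qmoment q \<gamma> g k * (complex_of_real (c+1))^k / complex_of_real (qfact q k))" by (rule gsum)
      then show ?thesis by (simp only: times_divide_eq_left)
    qed
    have s2: "summable (\<lambda>n. norm (qmoment q \<gamma> g n / complex_of_real (qfact q n) * (complex_of_real c)^n))"
      by (rule powser_insidea[OF s1]) (use c in simp)
    have e: "norm (qmoment q \<gamma> g n / complex_of_real (qfact q n) * (complex_of_real c)^n) = norm (m n) * c^n" for n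
    proof -
      have "norm (m n) = norm (qmoment q \<gamma> g n / complex_of_real (qfact q n))"
        unfolding m_def by (simp only: norm_mult norm_divide norm_power norm_minus_cancel norm_one power_one mult_1_left)
      moreover have "norm ((complex_of_real c)^n) = c^n" using c by (simp add: norm_power)
      ultimately show ?thesis by (simp only: norm_mult)
    qed
    show ?thesis using s2 unfolding e .
  qed
  have mser: "summable (\<lambda>e. m e * z^e)" for z
  proof -
    have "summable (\<lambda>e. norm (m e * z^e))"
      by (rule summable_comparison_test'[OF ms[of "norm z"]]) (auto simp: norm_mult norm_power)
    then show ?thesis by (rule summable_norm_cancel)
  qed
  have ser: "qmoment_series q \<gamma> g t = (\<Sum>e. m e * (-t)^e)" for t
  proof -
    have "m e * (-t)^e = qmoment q \<gamma> g e * t^e / complex_of_real (qfact q e)" for e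
    proof -
      have "m e * (-t)^e = ((-1)^e * (-1)^e) * (qmoment q \<gamma> g e * t^e / complex_of_real (qfact q e))"
        unfolding m_def power_minus[of t] by (simp only: times_divide_eq_left times_divide_eq_right mult_ac)
      then show ?thesis by simp
    qed
    then show ?thesis by (simp add: qmoment_series_def)
  qed
  have allm: "(\<forall>t. qmoment_series q \<gamma> g t = 0) \<longleftrightarrow> (\<forall>e. m e = 0)"
  proof
    assume A: "\<forall>t. qmoment_series q \<gamma> g t = 0"
    show "\<forall>e. m e = 0"
    proof (rule ccontr)
      assume "\<not> (\<forall>e. m e = 0)"
      then obtain e0 where e0: "m e0 \<noteq> 0" by blast
      obtain s0 where s0: "s0 > 0" "\<And>z. z \<noteq> 0 \<Longrightarrow> norm z \<le> s0 \<Longrightarrow> (\<Sum>e. m e * z^e) \<noteq> 0"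
        using powser_nz_near0[OF mser e0] by blast
      have "(\<Sum>e. m e * (complex_of_real s0)^e) \<noteq> 0" using s0 by (intro s0(2)) auto
      moreover have "(\<Sum>e. m e * (complex_of_real s0)^e) = 0"
        using A ser[of "- complex_of_real s0"] by simp
      ultimately show False by simp
    qed
  next
    assume "\<forall>e. m e = 0"
    then show "\<forall>t. qmoment_series q \<gamma> g t = 0" by (simp add: ser)
  qed
  have conv0: "qconv q \<gamma> g h x = 0" if "\<forall>e. m e = 0" for h x
    using that by (simp add: qconv_def tm)
  from assms(7) obtain a C where aC: "C > 0" "\<forall>l. norm (a l) \<le> C * s^l * q powr (real l ^ 2 / 2)"
      "\<forall>x\<in>strip. F x = (\<Sum>l. a l * x ^ l) * qexp (q^2) (- (x^2))"
    unfolding M_s_def by blast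
  have pw: "q powr (real l ^ 2 / 2) = sqrt q ^ (l^2)" for l
  proof -
    have "sqrt q ^ (l^2) = (q powr (1/2)) ^ (l^2)" using q0 by (simp add: powr_half_sqrt)
    also have "\<dots> = q powr (real (l^2) * (1/2))" using q0 by (simp add: powr_power)
    finally show ?thesis by simp
  qed
  have c: "ccls (sqrt q) s C a" using aC(2) pw by (simp add: ccls_def)
  have Fev: "\<forall>x\<in>strip. F x = ev a x * Gf q x" using aC(3) by (simp add: ev_def Gf_def)
  have ssq: "s * sqrt q < 1"
  proof -
    have "q powr (-1/2) = q powr (-(1/2))" by simp
    also have "\<dots> = inverse (q powr (1/2))" by (rule powr_minus)
    also have "\<dots> = inverse (sqrt q)" using q0 by (simp add: powr_half_sqrt)
    finally have "s < inverse (sqrt q)" using assms(5) by simp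
    moreover have sq: "sqrt q > 0" using q0 by simp
    ultimately have "s * sqrt q < inverse (sqrt q) * sqrt q" by (rule mult_strict_right_mono)
    then show ?thesis using sq by simp
  qed
  have Fzero_conv: "qconv q \<gamma> g F x = 0" if F0: "\<forall>x\<in>strip. F x = 0" and x: "x \<in> strip" for x
  proof -
    have "(qD q ^^ e) F x = 0" for e using qD_funpow_zero[OF q0 q1 F0] x by blast
    then show ?thesis by (simp add: qconv_def tm)
  qed
  have hard: "\<forall>x\<in>strip. F x = 0"
    if L: "\<forall>x\<in>strip. qconv_defined q \<gamma> g F x \<longrightarrow> qconv q \<gamma> g F x = 0" and nz: "\<not> (\<forall>e. m e = 0)"
  proof -
    obtain e0 where e0: "m e0 \<noteq> 0" using nz by blast
    have conv: "(\<Sum>e. m e * (qD q ^^ e) F x) = 0"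
      if "x \<in> strip" "x \<noteq> 0" "summable (\<lambda>e. norm (m e * (qD q ^^ e) F x))" for x
      using L that by (simp add: qconv_defined_def qconv_def tm)
    have "a n = 0" for n
      by (rule hard_dir[OF q0 q1 assms(4) ssq c Fev ms conv e0])
    then show ?thesis using Fev by (simp add: ev_def)
  qed
  have P1: "(\<forall>x\<in>strip. qconv_defined q \<gamma> g F x \<longrightarrow> qconv q \<gamma> g F x = 0)
           \<longleftrightarrow> ((\<forall>t. qmoment_series q \<gamma> g t = 0) \<or> (\<forall>x\<in>strip. F x = 0))"
  proof
    assume L: "\<forall>x\<in>strip. qconv_defined q \<gamma> g F x \<longrightarrow> qconv q \<gamma> g F x = 0"
    show "(\<forall>t. qmoment_series q \<gamma> g t = 0) \<or> (\<forall>x\<in>strip. F x = 0)"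
    proof (cases "\<forall>e. m e = 0")
      case True then show ?thesis using allm by blast
    next
      case False then show ?thesis using hard[OF L] by blast
    qed
  next
    assume R: "(\<forall>t. qmoment_series q \<gamma> g t = 0) \<or> (\<forall>x\<in>strip. F x = 0)"
    show "\<forall>x\<in>strip. qconv_defined q \<gamma> g F x \<longrightarrow> qconv q \<gamma> g F x = 0"
      using R
    proof
      assume "\<forall>t. qmoment_series q \<gamma> g t = 0"
      then show ?thesis using allm conv0 by blast
    next
      assume "\<forall>x\<in>strip. F x = 0"
      then show ?thesis using Fzero_conv by blast
    qed
  qed
  have P2: "(\<forall>x\<in>strip. qconv_defined q \<gamma> g F x \<longrightarrow> qconv q \<gamma> g F x = 0)
           \<and> (\<exists>x\<in>strip. F x \<noteq> 0)
         \<longrightarrow> (\<forall>(h::complex \<Rightarrow> complex) x. qconv_defined q \<gamma> g h x \<longrightarrow> qconv q \<gamma> g h x = 0)"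
  proof (intro impI allI)
    fix h :: "complex \<Rightarrow> complex" and x
    assume A: "(\<forall>x\<in>strip. qconv_defined q \<gamma> g F x \<longrightarrow> qconv q \<gamma> g F x = 0) \<and> (\<exists>x\<in>strip. F x \<noteq> 0)"
    then have "\<forall>t. qmoment_series q \<gamma> g t = 0" using P1 by blast
    then have "\<forall>e. m e = 0" using allm by blast
    then show "qconv q \<gamma> g h x = 0" by (rule conv0)
  qed
  show ?thesis using P1 P2 by blast
qed

end
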